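(* Let $B$ be an object of $\mathsf{SquaMS}$, $p\ge0$, $n_0,\dots,n_{p-1},n'_0,\dots,n'_{p-1}\in N$ and $(r,s),(t,u)\in\{0,1\}^2$. Then the distance in $N^p\otimes B$ between $n_0\otimes\cdots\otimes n_{p-1}\otimes S_B((r,s))$ and $n'_0\otimes\cdots\otimes n'_{p-1}\otimes S_B((t,u))$ equals $\frac{h+v}{3^p}$, where $(h,v)$ are $3^p$ times the absolute differences of the $x$- and $y$-coordinates of the plane points $\sum_{k<p}n_k/3^{k+1}+(r,s)/3^p$ and $\sum_{k<p}n'_k/3^{k+1}+(t,u)/3^p$. In particular, writing $n_k=(i_k,j_k)$, $n'_k=(k_k,l_k)$, $$d_{N^p\otimes B}\big((i_0,j_0)\otimes\cdots\otimes(i_{p-1},j_{p-1})\otimes S_B((0,0)),(k_0,l_0)\otimes\cdots\otimes(k_{p-1},l_{p-1})\otimes S_B((0,0))\big)=\Big|\sum_{m=0}^{p-1}\frac{i_m-k_m}{3^{m+1}}\Big|+\Big|\sum_{m=0}^{p-1}\frac{j_m-l_m}{3^{m+1}}\Big|.$$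
   Context: Let $M_0=\{(r,s)\in[0,1]^2: r\in\{0,1\}\text{ or } s\in\{0,1\}\}$. A square metric space is a pair $(X,S_X)$ with $X$ a metric space with all distances at most $2$ and $S_X\colon M_0\to X$ injective such that (sq1) for $i\in\{0,1\}$, $r,s\in[0,1]$: $d_X(S_X(i,r),S_X(i,s))=|s-r|$ and $d_X(S_X(r,i),S_X(s,i))=|s-r|$; (sq2) $d_X(S_X(r,s),S_X(t,u))\ge|r-t|+|s-u|$; $\mathsf{SquaMS}$ is the category of these with short $S$-preserving maps. Let $N=\{0,1,2\}^2$, also viewed as points of $\mathbb{R}^2$. For $X$ in $\mathsf{SquaMS}$, $N\otimes X=(N\times X)/\!\sim$, where $\sim$ is generated by $(m,S_X(p))\sim(n,S_X(q))$ whenever $m,n\in N$ differ by exactly $1$ in exactly one coordinate and $(m+p)/3=(n+q)/3$; $n\otimes x$ is the class of $(n,x)$; the metric is the quotient of $d((a,u),(b,v))=\frac13 d_X(u,v)$ if $a=b$, $2$ otherwise (infimum over finite chains, $\sim$-related consecutive pairs counting $0$); $S_{N\otimes X}(q)=n\otimes S_X(3q-n)$ for $n\in N$ with $q\in(n+[0,1]^2)/3$. $N^0\otimes B=B$, $N^{p+1}\otimes B=N\otimes(N^p\otimes B)$, with elements written $n_0\otimes\cdots\otimes n_{p-1}\otimes b$. *)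

theory Defs
  imports "HOL-Analysis.Analysis"
begin

text \<open>A (candidate) square metric space is a triple (carrier, distance, S).\<close>
type_synonym 'a sqms = "'a set \<times> ('a \<Rightarrow> 'a \<Rightarrow> real) \<times> (real \<times> real \<Rightarrow> 'a)"

definition NN :: "(nat \<times> nat) set" where
  "NN = {0..2} \<times> {0..2}"

definition M0 :: "(real \<times> real) set" where
  "M0 = {(r, s). 0 \<le> r \<and> r \<le> 1 \<and> 0 \<le> s \<and> s \<le> 1 \<and> (r \<in> {0, 1} \<or> s \<in> {0, 1})}"

definition square_ms :: "'a set \<Rightarrow> ('a \<Rightarrow> 'a \<Rightarrow> real) \<Rightarrow> (real \<times> real \<Rightarrow> 'a) \<Rightarrow> bool" where
  "square_ms X d S \<longleftrightarrow>
     Metric_space X d \<and> (\<forall>x\<in>X. \<forall>y\<in>X. d x y \<le> 2) \<and>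
     S ` M0 \<subseteq> X \<and> inj_on S M0 \<and>
     (\<forall>i\<in>{0, 1}. \<forall>r\<in>{0..1}. \<forall>s\<in>{0..1}.
        d (S (i, r)) (S (i, s)) = \<bar>s - r\<bar> \<and> d (S (r, i)) (S (s, i)) = \<bar>s - r\<bar>) \<and>
     (\<forall>p\<in>M0. \<forall>q\<in>M0. d (S p) (S q) \<ge> \<bar>fst p - fst q\<bar> + \<bar>snd p - snd q\<bar>)"

definition adjacent :: "nat \<times> nat \<Rightarrow> nat \<times> nat \<Rightarrow> bool" where
  "adjacent m n \<longleftrightarrow>
     (fst m = fst n \<and> \<bar>int (snd m) - int (snd n)\<bar> = 1) \<or>
     (snd m = snd n \<and> \<bar>int (fst m) - int (fst n)\<bar> = 1)"

definition gen_rel :: "'a set \<Rightarrow> (real \<times> real \<Rightarrow> 'a) \<Rightarrow> (((nat \<times> nat) \<times> 'a) \<times> ((nat \<times> nat) \<times> 'a)) set" where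
  "gen_rel X S = {((m, S p), (n, S q)) | m n p q.
      m \<in> NN \<and> n \<in> NN \<and> adjacent m n \<and> p \<in> M0 \<and> q \<in> M0 \<and>
      (real (fst m) + fst p) / 3 = (real (fst n) + fst q) / 3 \<and>
      (real (snd m) + snd p) / 3 = (real (snd n) + snd q) / 3}"

definition sim_rel :: "'a set \<Rightarrow> (real \<times> real \<Rightarrow> 'a) \<Rightarrow> (((nat \<times> nat) \<times> 'a) \<times> ((nat \<times> nat) \<times> 'a)) set" where
  "sim_rel X S = (gen_rel X S \<union> (gen_rel X S)\<inverse>)\<^sup>* \<inter> ((NN \<times> X) \<times> (NN \<times> X))"

definition pre_dist :: "('a \<Rightarrow> 'a \<Rightarrow> real) \<Rightarrow> (nat \<times> nat) \<times> 'a \<Rightarrow> (nat \<times> nat) \<times> 'a \<Rightarrow> real" where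
  "pre_dist d z w = (if fst z = fst w then d (snd z) (snd w) / 3 else 2)"

definition step_cost :: "'a sqms \<Rightarrow> (nat \<times> nat) \<times> 'a \<Rightarrow> (nat \<times> nat) \<times> 'a \<Rightarrow> real" where
  "step_cost T z w = (case T of (X, d, S) \<Rightarrow>
      (if (z, w) \<in> sim_rel X S then 0 else pre_dist d z w))"

definition chain_dist :: "'a sqms \<Rightarrow> (nat \<times> nat) \<times> 'a \<Rightarrow> (nat \<times> nat) \<times> 'a \<Rightarrow> real" where
  "chain_dist T z w = (case T of (X, d, S) \<Rightarrow>
     Inf {(\<Sum>i<length zs - 1. step_cost T (zs ! i) (zs ! Suc i)) | zs.
            zs \<noteq> [] \<and> hd zs = z \<and> last zs = w \<and> set zs \<subseteq> NN \<times> X})"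

text \<open>Encoding of the iterated quotients: an element of N^p \<otimes> B is represented
  as a set of pairs (list of p indices, element of B), namely the set of all
  representatives n_0 \<otimes> ... \<otimes> n_{p-1} \<otimes> b of that element.
  Classes of N \<times> X (X encoded in this way) are encoded by prefixing indices.\<close>
type_synonym 'b enc = "((nat \<times> nat) list \<times> 'b) set"

definition emb :: "nat \<times> nat \<Rightarrow> 'b enc \<Rightarrow> 'b enc" where
  "emb m c = (\<lambda>(l, b). (m # l, b)) ` c"

definition encode_cls :: "((nat \<times> nat) \<times> 'b enc) set \<Rightarrow> 'b enc" where
  "encode_cls K = (\<Union>(m, c)\<in>K. emb m c)"

definition ten_elt :: "'b enc sqms \<Rightarrow> nat \<times> nat \<Rightarrow> 'b enc \<Rightarrow> 'b enc" where
  "ten_elt T n x = (case T of (X, d, S) \<Rightarrow> encode_cls (sim_rel X S `` {(n, x)}))"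

definition cell :: "nat \<times> nat \<Rightarrow> real \<times> real \<Rightarrow> bool" where
  "cell n q \<longleftrightarrow> real (fst n) / 3 \<le> fst q \<and> fst q \<le> (real (fst n) + 1) / 3 \<and>
                real (snd n) / 3 \<le> snd q \<and> snd q \<le> (real (snd n) + 1) / 3"

definition tensor :: "'b enc sqms \<Rightarrow> 'b enc sqms" where
  "tensor T = (case T of (X, d, S) \<Rightarrow>
     ({ten_elt T n x | n x. n \<in> NN \<and> x \<in> X},
      (\<lambda>a b. Inf {chain_dist T z w | z w. z \<in> NN \<times> X \<and> w \<in> NN \<times> X \<and>
                     ten_elt T (fst z) (snd z) = a \<and> ten_elt T (fst w) (snd w) = b}),
      (\<lambda>q. let n = (SOME n. n \<in> NN \<and> cell n q)
           in ten_elt T n (S (3 * fst q - real (fst n), 3 * snd q - real (snd n))))))"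

definition base_enc :: "'b sqms \<Rightarrow> 'b enc sqms" where
  "base_enc B = (case B of (X, d, S) \<Rightarrow>
     ((\<lambda>b. {([], b)}) ` X,
      (\<lambda>a c. d (snd (the_elem a)) (snd (the_elem c))),
      (\<lambda>q. {([], S q)})))"

fun tensor_pow :: "nat \<Rightarrow> 'b sqms \<Rightarrow> 'b enc sqms" where
  "tensor_pow 0 B = base_enc B"
| "tensor_pow (Suc p) B = tensor (tensor_pow p B)"

fun tens_elem :: "'b sqms \<Rightarrow> (nat \<times> nat) list \<Rightarrow> 'b \<Rightarrow> 'b enc" where
  "tens_elem B [] b = {([], b)}"
| "tens_elem B (n # ns) b = ten_elt (tensor_pow (length ns) B) n (tens_elem B ns b)"

definition tdist :: "nat \<Rightarrow> 'b sqms \<Rightarrow> 'b enc \<Rightarrow> 'b enc \<Rightarrow> real" where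
  "tdist p B = fst (snd (tensor_pow p B))"

end

theory Submission
  imports Defs
begin

definition csum :: "'a sqms \<Rightarrow> ((nat \<times> nat) \<times> 'a) list \<Rightarrow> real" where
  "csum T zs = (\<Sum>i<length zs - 1. step_cost T (zs ! i) (zs ! Suc i))"

lemma csum_single[simp]: "csum T [a] = 0"
  by (simp add: csum_def)

lemma csum_cons2[simp]: "csum T (a # b # zs) = step_cost T a b + csum T (b # zs)"
  unfolding csum_def by (simp add: sum.lessThan_Suc_shift del: sum.lessThan_Suc)

lemma csum_append:
  assumes "xs \<noteq> []" "ys \<noteq> []" "last xs = hd ys"
  shows "csum T (xs @ tl ys) = csum T xs + csum T ys"
  using assms
proof (induction xs)
  case Nil then show ?case by simp
next
  case (Cons a xs)
  show ?case
  proof (cases xs)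
    case Nil
    then show ?thesis using Cons.prems by (cases ys) auto
  next
    case (Cons b xs')
    have "xs @ tl ys = b # (xs' @ tl ys)" using Cons by simp
    then have "csum T ((a # xs) @ tl ys) = step_cost T a b + csum T (xs @ tl ys)"
      using Cons by simp
    also have "\<dots> = step_cost T a b + csum T xs + csum T ys"
      using Cons.IH Cons.prems Cons by simp
    finally show ?thesis using Cons by simp
  qed
qed

definition CS :: "'a sqms \<Rightarrow> (nat \<times> nat) \<times> 'a \<Rightarrow> (nat \<times> nat) \<times> 'a \<Rightarrow> real set" where
  "CS T z w = {csum T zs | zs. zs \<noteq> [] \<and> hd zs = z \<and> last zs = w \<and> set zs \<subseteq> NN \<times> fst T}"

lemma chain_dist_CS: "chain_dist (X, d, S) z w = Inf (CS (X, d, S) z w)"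
  unfolding chain_dist_def CS_def csum_def by simp

definition INV :: "'b enc set \<Rightarrow> ('b enc \<Rightarrow> 'b enc \<Rightarrow> real) \<Rightarrow> (real \<times> real \<Rightarrow> 'b enc) \<Rightarrow> bool" where
  "INV X d S \<longleftrightarrow> (\<forall>x\<in>X. x \<noteq> {}) \<and> (\<forall>x\<in>X. \<forall>y\<in>X. x \<inter> y \<noteq> {} \<longrightarrow> x = y) \<and>
     (\<forall>x\<in>X. \<forall>y\<in>X. 0 \<le> d x y) \<and> (\<forall>x\<in>X. d x x = 0) \<and>
     (\<forall>x\<in>X. \<forall>y\<in>X. \<forall>z\<in>X. d x z \<le> d x y + d y z) \<and> S ` M0 \<subseteq> X \<and> inj_on S M0"

lemma step_cost_nonneg:
  assumes "\<forall>x\<in>X. \<forall>y\<in>X. 0 \<le> d x y" "z \<in> NN \<times> X" "w \<in> NN \<times> X"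
  shows "0 \<le> step_cost (X, d, S) z w"
  using assms by (auto simp: step_cost_def pre_dist_def)

lemma step_cost_le:
  assumes "\<forall>x\<in>X. \<forall>y\<in>X. 0 \<le> d x y" "z \<in> NN \<times> X" "w \<in> NN \<times> X"
  shows "step_cost (X, d, S) z w \<le> pre_dist d z w"
  using assms by (auto simp: step_cost_def pre_dist_def)

lemma csum_nonneg:
  assumes "\<forall>x\<in>X. \<forall>y\<in>X. 0 \<le> d x y" "set zs \<subseteq> NN \<times> X"
  shows "0 \<le> csum (X, d, S) zs"
  unfolding csum_def
proof (rule sum_nonneg)
  fix i assume "i \<in> {..<length zs - 1}"
  then have "zs ! i \<in> set zs" "zs ! Suc i \<in> set zs" by auto
  then show "0 \<le> step_cost (X, d, S) (zs ! i) (zs ! Suc i)"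
    using assms step_cost_nonneg by blast
qed

context
  fixes X :: "'b enc set" and d :: "'b enc \<Rightarrow> 'b enc \<Rightarrow> real" and S :: "real \<times> real \<Rightarrow> 'b enc"
  assumes dnn: "\<forall>x\<in>X. \<forall>y\<in>X. 0 \<le> d x y"
begin

lemma CS_ne: "z \<in> NN \<times> X \<Longrightarrow> w \<in> NN \<times> X \<Longrightarrow> csum (X,d,S) [z, w] \<in> CS (X, d, S) z w"
  unfolding CS_def by (intro CollectI exI[of _ "[z,w]"]) auto

lemma CS_bdd: "bdd_below (CS (X, d, S) z w)"
  unfolding CS_def bdd_below_def using csum_nonneg[OF dnn] by fastforce

lemma cd_le: "s \<in> CS (X, d, S) z w \<Longrightarrow> chain_dist (X, d, S) z w \<le> s"
  unfolding chain_dist_CS by (rule cInf_lower[OF _ CS_bdd])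

lemma cd_ge: "z \<in> NN \<times> X \<Longrightarrow> w \<in> NN \<times> X \<Longrightarrow> (\<And>s. s \<in> CS (X, d, S) z w \<Longrightarrow> c \<le> s)
   \<Longrightarrow> c \<le> chain_dist (X, d, S) z w"
  unfolding chain_dist_CS using CS_ne by (intro cInf_greatest) blast+

lemma cd_nonneg: "z \<in> NN \<times> X \<Longrightarrow> w \<in> NN \<times> X \<Longrightarrow> 0 \<le> chain_dist (X, d, S) z w"
  by (rule cd_ge) (auto simp: CS_def intro: csum_nonneg[OF dnn])

lemma cd_step: "z \<in> NN \<times> X \<Longrightarrow> w \<in> NN \<times> X \<Longrightarrow> chain_dist (X, d, S) z w \<le> step_cost (X,d,S) z w"
  using cd_le[OF CS_ne] by simp

lemma cd_refl: "z \<in> NN \<times> X \<Longrightarrow> chain_dist (X, d, S) z z = 0"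
proof -
  assume z: "z \<in> NN \<times> X"
  have "csum (X,d,S) [z] \<in> CS (X, d, S) z z" unfolding CS_def using z by (intro CollectI exI[of _ "[z]"]) auto
  then have "chain_dist (X, d, S) z z \<le> 0" using cd_le by fastforce
  with cd_nonneg[OF z z] show ?thesis by simp
qed

lemma CS_trans: "s1 \<in> CS (X, d, S) z y \<Longrightarrow> s2 \<in> CS (X, d, S) y w \<Longrightarrow> s1 + s2 \<in> CS (X, d, S) z w"
proof -
  assume "s1 \<in> CS (X, d, S) z y" "s2 \<in> CS (X, d, S) y w"
  then obtain xs ys where xs: "xs \<noteq> []" "hd xs = z" "last xs = y" "set xs \<subseteq> NN \<times> X" "s1 = csum (X,d,S) xs"
    and ys: "ys \<noteq> []" "hd ys = y" "last ys = w" "set ys \<subseteq> NN \<times> X" "s2 = csum (X,d,S) ys"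
    unfolding CS_def by auto
  have "csum (X,d,S) (xs @ tl ys) = s1 + s2" using csum_append xs ys by metis
  moreover have "xs @ tl ys \<noteq> []" "hd (xs @ tl ys) = z" using xs by auto
  moreover have "last (xs @ tl ys) = w"
    using xs ys by (cases ys; cases "tl ys") auto
  moreover have "set (xs @ tl ys) \<subseteq> NN \<times> X" using xs ys by (cases ys) auto
  ultimately show ?thesis unfolding CS_def by fastforce
qed

lemma cd_trans:
  assumes "z \<in> NN \<times> X" "y \<in> NN \<times> X" "w \<in> NN \<times> X"
  shows "chain_dist (X, d, S) z w \<le> chain_dist (X, d, S) z y + chain_dist (X, d, S) y w"
proof -
  have "chain_dist (X, d, S) z w - s2 \<le> chain_dist (X, d, S) z y" if s2: "s2 \<in> CS (X, d, S) y w" for s2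
  proof -
    have "chain_dist (X, d, S) z w - s2 \<le> s1" if "s1 \<in> CS (X, d, S) z y" for s1
      using cd_le[OF CS_trans[OF that s2]] by simp
    then show ?thesis using cd_ge assms by blast
  qed
  then have "chain_dist (X, d, S) z w - chain_dist (X, d, S) z y \<le> chain_dist (X, d, S) y w"
    using cd_ge[OF assms(2,3)] by (smt (verit))
  then show ?thesis by simp
qed

end

lemma emb_mem: "y \<in> emb m c \<longleftrightarrow> (\<exists>l b. y = (m # l, b) \<and> (l, b) \<in> c)"
  unfolding emb_def by auto

lemma encode_mem: "y \<in> encode_cls K \<longleftrightarrow> (\<exists>m c. (m, c) \<in> K \<and> y \<in> emb m c)"
  unfolding encode_cls_def by auto

lemma gen_rel_mem: "((a, b) \<in> gen_rel X S) \<longleftrightarrow> (\<exists>m n p q. a = (m, S p) \<and> b = (n, S q) \<and>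
      m \<in> NN \<and> n \<in> NN \<and> adjacent m n \<and> p \<in> M0 \<and> q \<in> M0 \<and>
      real (fst m) + fst p = real (fst n) + fst q \<and>
      real (snd m) + snd p = real (snd n) + snd q)"
  unfolding gen_rel_def by (rule iffI; clarsimp) (fastforce)+

lemma sim_sym: "(z, w) \<in> sim_rel X S \<Longrightarrow> (w, z) \<in> sim_rel X S"
proof -
  assume a: "(z, w) \<in> sim_rel X S"
  let ?G = "gen_rel X S \<union> (gen_rel X S)\<inverse>"
  have "(z, w) \<in> ?G\<^sup>*" using a unfolding sim_rel_def by auto
  then have "(w, z) \<in> (?G\<inverse>)\<^sup>*" by (rule rtrancl_converseI)
  moreover have "?G\<inverse> = ?G" by auto
  ultimately show ?thesis using a unfolding sim_rel_def by auto
qed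

lemma sim_trans: "(z, y) \<in> sim_rel X S \<Longrightarrow> (y, w) \<in> sim_rel X S \<Longrightarrow> (z, w) \<in> sim_rel X S"
  unfolding sim_rel_def by (auto intro: rtrancl_trans)

lemma sim_refl: "z \<in> NN \<times> X \<Longrightarrow> (z, z) \<in> sim_rel X S"
  unfolding sim_rel_def by auto

lemma sim_dom: "(z, w) \<in> sim_rel X S \<Longrightarrow> z \<in> NN \<times> X \<and> w \<in> NN \<times> X"
  unfolding sim_rel_def by auto

lemma gen_sim: "(z, w) \<in> gen_rel X S \<Longrightarrow> z \<in> NN \<times> X \<Longrightarrow> w \<in> NN \<times> X \<Longrightarrow> (z, w) \<in> sim_rel X S"
  unfolding sim_rel_def by auto

lemma sim_struct:
  assumes inj: "inj_on S M0" and zw: "(z, w) \<in> sim_rel X S"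
  shows "z = w \<or> (\<exists>q\<in>M0. \<exists>q'\<in>M0. snd z = S q \<and> snd w = S q' \<and>
            real (fst (fst z)) + fst q = real (fst (fst w)) + fst q' \<and>
            real (snd (fst z)) + snd q = real (snd (fst w)) + snd q')"
proof -
  let ?G = "gen_rel X S \<union> (gen_rel X S)\<inverse>"
  have "(z, w) \<in> ?G\<^sup>*" using zw unfolding sim_rel_def by auto
  then show ?thesis
  proof (induction rule: rtrancl_induct)
    case base then show ?case by simp
  next
    case (step y w)
    have "\<exists>m n p q. ((y = (m, S p) \<and> w = (n, S q)) \<or> (w = (m, S p) \<and> y = (n, S q))) \<and>
       p \<in> M0 \<and> q \<in> M0 \<and> real (fst m) + fst p = real (fst n) + fst q \<and> real (snd m) + snd p = real (snd n) + snd q"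
    proof (cases "(y, w) \<in> gen_rel X S")
      case True then show ?thesis unfolding gen_rel_mem by blast
    next
      case False
      then have "(w, y) \<in> gen_rel X S" using step.hyps(2) by auto
      then show ?thesis unfolding gen_rel_mem by blast
    qed
    then obtain m n p q where
      st: "(y = (m, S p) \<and> w = (n, S q)) \<or> (w = (m, S p) \<and> y = (n, S q))"
      and pq: "p \<in> M0" "q \<in> M0"
      and e: "real (fst m) + fst p = real (fst n) + fst q" "real (snd m) + snd p = real (snd n) + snd q"
      by blast
    from step.IH show ?case
    proof
      assume "z = y"
      then show ?thesis using st pq e by (metis fst_conv snd_conv)
    next
      assume "\<exists>q\<in>M0. \<exists>q'\<in>M0. snd z = S q \<and> snd y = S q' \<and>
            real (fst (fst z)) + fst q = real (fst (fst y)) + fst q' \<and>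
            real (snd (fst z)) + snd q = real (snd (fst y)) + snd q'"
      then obtain q0 q1 where q01: "q0 \<in> M0" "q1 \<in> M0" "snd z = S q0" "snd y = S q1"
        "real (fst (fst z)) + fst q0 = real (fst (fst y)) + fst q1"
        "real (snd (fst z)) + snd q0 = real (snd (fst y)) + snd q1" by blast
      from st show ?thesis
      proof
        assume h: "y = (m, S p) \<and> w = (n, S q)"
        then have "q1 = p" using q01 inj pq inj_onD by fastforce
        then show ?thesis using h q01 pq e by (intro disjI2 bexI[of _ q0] bexI[of _ q]) auto
      next
        assume h: "w = (m, S p) \<and> y = (n, S q)"
        then have "q1 = q" using q01 inj pq inj_onD by fastforce
        then show ?thesis using h q01 pq e by (intro disjI2 bexI[of _ q0] bexI[of _ p]) auto
      qed
    qed
  qed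
qed

lemma cell_exists:
  assumes "0 \<le> a" "a \<le> 1" "0 \<le> b" "b \<le> 1"
  shows "\<exists>n. n \<in> NN \<and> cell n (a, b)"
proof -
  have c1: "\<exists>k::nat. k \<le> 2 \<and> real k / 3 \<le> x \<and> x \<le> (real k + 1) / 3" if "0 \<le> x" "x \<le> 1" for x :: real
  proof (cases "x \<le> 1/3")
    case True then show ?thesis using that by (intro exI[of _ 0]) auto
  next
    case False
    then show ?thesis
    proof (cases "x \<le> 2/3")
      case True then show ?thesis using False by (intro exI[of _ 1]) auto
    next
      case False2: False then show ?thesis using that by (intro exI[of _ 2]) auto
    qed
  qed
  obtain k1 where "k1 \<le> 2" "real k1 / 3 \<le> a" "a \<le> (real k1 + 1) / 3" using c1 assms by blast
  moreover obtain k2 where "k2 \<le> 2" "real k2 / 3 \<le> b" "b \<le> (real k2 + 1) / 3" using c1 assms by blast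
  ultimately show ?thesis by (intro exI[of _ "(k1, k2)"]) (auto simp: NN_def cell_def)
qed

lemma M0_local:
  assumes "q \<in> M0" "n \<in> NN" "cell n q"
  shows "(3 * fst q - real (fst n), 3 * snd q - real (snd n)) \<in> M0"
proof -
  obtain a b where q: "q = (a, b)" by force
  obtain i j where n: "n = (i, j)" "i \<le> 2" "j \<le> 2" using assms(2) by (auto simp: NN_def)
  have ab: "0 \<le> a" "a \<le> 1" "0 \<le> b" "b \<le> 1" "a = 0 \<or> a = 1 \<or> b = 0 \<or> b = 1"
    using assms(1) q by (auto simp: M0_def)
  have c: "real i / 3 \<le> a" "a \<le> (real i + 1) / 3" "real j / 3 \<le> b" "b \<le> (real j + 1) / 3"
    using assms(3) q n by (auto simp: cell_def)
  have "a = 0 \<Longrightarrow> i = 0" using c by auto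
  moreover have "a = 1 \<Longrightarrow> i = 2" using c n by auto
  moreover have "b = 0 \<Longrightarrow> j = 0" using c by auto
  moreover have "b = 1 \<Longrightarrow> j = 2" using c n by auto
  ultimately show ?thesis using ab c q n unfolding M0_def by auto
qed

lemma M0_box: "q \<in> M0 \<Longrightarrow> 0 \<le> fst q \<and> fst q \<le> 1 \<and> 0 \<le> snd q \<and> snd q \<le> 1"
  unfolding M0_def by auto

lemma ten_elt_def': "ten_elt (X, d, S) n x = encode_cls (sim_rel X S `` {(n, x)})"
  unfolding ten_elt_def by simp

lemma tensor_X: "fst (tensor (X, d, S)) = {ten_elt (X, d, S) n x | n x. n \<in> NN \<and> x \<in> X}"
  unfolding tensor_def by simp

lemma tensor_d: "fst (snd (tensor (X, d, S))) = (\<lambda>a b. Inf {chain_dist (X, d, S) z w | z w. z \<in> NN \<times> X \<and> w \<in> NN \<times> X \<and>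
                     ten_elt (X, d, S) (fst z) (snd z) = a \<and> ten_elt (X, d, S) (fst w) (snd w) = b})"
  unfolding tensor_def by simp

lemma tensor_S: "snd (snd (tensor (X, d, S))) = (\<lambda>q. let n = (SOME n. n \<in> NN \<and> cell n q)
           in ten_elt (X, d, S) n (S (3 * fst q - real (fst n), 3 * snd q - real (snd n))))"
  unfolding tensor_def by simp

context
  fixes X :: "'b enc set" and d :: "'b enc \<Rightarrow> 'b enc \<Rightarrow> real" and S :: "real \<times> real \<Rightarrow> 'b enc"
  assumes inv: "INV X d S"
begin

lemma dnn: "\<forall>x\<in>X. \<forall>y\<in>X. 0 \<le> d x y" using inv unfolding INV_def by simp
lemma inv_ne: "x \<in> X \<Longrightarrow> x \<noteq> {}" using inv unfolding INV_def by simp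
lemma inv_disj: "x \<in> X \<Longrightarrow> y \<in> X \<Longrightarrow> x \<inter> y \<noteq> {} \<Longrightarrow> x = y" using inv unfolding INV_def by simp
lemma inv_SX: "S ` M0 \<subseteq> X" using inv unfolding INV_def by simp
lemma inv_inj: "inj_on S M0" using inv unfolding INV_def by simp

lemma DJ:
  assumes "y \<in> ten_elt (X, d, S) (fst z) (snd z)" "y \<in> ten_elt (X, d, S) (fst w) (snd w)"
  shows "(z, w) \<in> sim_rel X S"
proof -
  have a1: "y \<in> encode_cls (sim_rel X S `` {z})" using assms(1) unfolding ten_elt_def' by simp
  have a2: "y \<in> encode_cls (sim_rel X S `` {w})" using assms(2) unfolding ten_elt_def' by simp
  from a1 obtain m c l b where 1: "(z, (m, c)) \<in> sim_rel X S" "y = (m # l, b)" "(l, b) \<in> c"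
    unfolding encode_mem emb_mem Image_singleton_iff by blast
  from a2 obtain m' c' l' b' where 2: "(w, (m', c')) \<in> sim_rel X S" "y = (m' # l', b')" "(l', b') \<in> c'"
    unfolding encode_mem emb_mem Image_singleton_iff by blast
  have "c \<in> X" "c' \<in> X" using sim_dom[OF 1(1)] sim_dom[OF 2(1)] by auto
  moreover have "c \<inter> c' \<noteq> {}" using 1 2 by auto
  ultimately have "c = c'" by (rule inv_disj)
  then have "(z, (m, c)) \<in> sim_rel X S" "((m, c), w) \<in> sim_rel X S" using 1 2 sim_sym[OF 2(1)] by auto
  then show ?thesis by (rule sim_trans)
qed

lemma ten_ne: "z \<in> NN \<times> X \<Longrightarrow> ten_elt (X, d, S) (fst z) (snd z) \<noteq> {}"
proof -
  assume z: "z \<in> NN \<times> X"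
  then obtain lb where "lb \<in> snd z" using inv_ne by (metis ex_in_conv mem_Times_iff)
  moreover have "(z, z) \<in> sim_rel X S" using z by (rule sim_refl)
  then have "(fst z, snd z) \<in> sim_rel X S `` {z}" by simp
  moreover obtain l b where "lb = (l, b)" by force
  ultimately have "(fst z # l, b) \<in> emb (fst z) (snd z)" "(fst z, snd z) \<in> sim_rel X S `` {z}"
    using \<open>lb \<in> snd z\<close> unfolding emb_mem by auto
  then have "(fst z # l, b) \<in> encode_cls (sim_rel X S `` {z})" unfolding encode_mem by blast
  then show ?thesis unfolding ten_elt_def' by auto
qed

lemma ten_eq_sim: "(z, w) \<in> sim_rel X S \<Longrightarrow> ten_elt (X, d, S) (fst z) (snd z) = ten_elt (X, d, S) (fst w) (snd w)"
proof -
  assume zw: "(z, w) \<in> sim_rel X S"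
  have "sim_rel X S `` {z} = sim_rel X S `` {w}"
  proof (rule set_eqI)
    fix x
    have "(z, x) \<in> sim_rel X S \<longleftrightarrow> (w, x) \<in> sim_rel X S"
      using zw sim_sym[OF zw] sim_trans by metis
    then show "x \<in> sim_rel X S `` {z} \<longleftrightarrow> x \<in> sim_rel X S `` {w}" by simp
  qed
  then show ?thesis unfolding ten_elt_def' by simp
qed

lemma ten_eq_iff: "z \<in> NN \<times> X \<Longrightarrow>
   ten_elt (X, d, S) (fst z) (snd z) = ten_elt (X, d, S) (fst w) (snd w) \<longleftrightarrow> (z, w) \<in> sim_rel X S"
proof
  assume z: "z \<in> NN \<times> X" and e: "ten_elt (X, d, S) (fst z) (snd z) = ten_elt (X, d, S) (fst w) (snd w)"
  obtain y where "y \<in> ten_elt (X, d, S) (fst z) (snd z)" using ten_ne[OF z] by blast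
  then show "(z, w) \<in> sim_rel X S" using e DJ by simp
next
  assume "(z, w) \<in> sim_rel X S"
  then show "ten_elt (X, d, S) (fst z) (snd z) = ten_elt (X, d, S) (fst w) (snd w)" by (rule ten_eq_sim)
qed

lemma cd_inv_l: "(z', z) \<in> sim_rel X S \<Longrightarrow> w \<in> NN \<times> X \<Longrightarrow> chain_dist (X, d, S) z' w \<le> chain_dist (X, d, S) z w"
proof -
  assume r: "(z', z) \<in> sim_rel X S" and w: "w \<in> NN \<times> X"
  have zz: "z' \<in> NN \<times> X" "z \<in> NN \<times> X" using sim_dom[OF r] by auto
  have "chain_dist (X, d, S) z' w \<le> chain_dist (X, d, S) z' z + chain_dist (X, d, S) z w"
    using cd_trans[OF dnn zz(1) zz(2) w] .
  moreover have "chain_dist (X, d, S) z' z \<le> 0"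
    using cd_step[OF dnn zz, of S] r by (simp add: step_cost_def)
  ultimately show ?thesis by simp
qed

lemma cd_inv_r: "(w, w') \<in> sim_rel X S \<Longrightarrow> z \<in> NN \<times> X \<Longrightarrow> chain_dist (X, d, S) z w' \<le> chain_dist (X, d, S) z w"
proof -
  assume r: "(w, w') \<in> sim_rel X S" and z: "z \<in> NN \<times> X"
  have ww: "w \<in> NN \<times> X" "w' \<in> NN \<times> X" using sim_dom[OF r] by auto
  have "chain_dist (X, d, S) z w' \<le> chain_dist (X, d, S) z w + chain_dist (X, d, S) w w'"
    using cd_trans[OF dnn z ww(1) ww(2)] .
  moreover have "chain_dist (X, d, S) w w' \<le> 0"
    using cd_step[OF dnn ww, of S] r by (simp add: step_cost_def)
  ultimately show ?thesis by simp
qed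

lemma DL:
  assumes z: "z \<in> NN \<times> X" and w: "w \<in> NN \<times> X"
  shows "fst (snd (tensor (X, d, S))) (ten_elt (X, d, S) (fst z) (snd z)) (ten_elt (X, d, S) (fst w) (snd w))
     = chain_dist (X, d, S) z w"
proof -
  have "{chain_dist (X, d, S) z' w' | z' w'. z' \<in> NN \<times> X \<and> w' \<in> NN \<times> X \<and>
                     ten_elt (X, d, S) (fst z') (snd z') = ten_elt (X, d, S) (fst z) (snd z) \<and>
                     ten_elt (X, d, S) (fst w') (snd w') = ten_elt (X, d, S) (fst w) (snd w)}
        = {chain_dist (X, d, S) z w}"
  proof (rule set_eqI, rule iffI)
    fix c assume "c \<in> {chain_dist (X, d, S) z' w' | z' w'. z' \<in> NN \<times> X \<and> w' \<in> NN \<times> X \<and>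
                     ten_elt (X, d, S) (fst z') (snd z') = ten_elt (X, d, S) (fst z) (snd z) \<and>
                     ten_elt (X, d, S) (fst w') (snd w') = ten_elt (X, d, S) (fst w) (snd w)}"
    then obtain z' w' where h: "z' \<in> NN \<times> X" "w' \<in> NN \<times> X" "c = chain_dist (X, d, S) z' w'"
      "(z', z) \<in> sim_rel X S" "(w', w) \<in> sim_rel X S" using ten_eq_iff by blast
    have "chain_dist (X, d, S) z' w' \<le> chain_dist (X, d, S) z w'" using cd_inv_l h by blast
    also have "\<dots> \<le> chain_dist (X, d, S) z w" using cd_inv_r h sim_sym z by blast
    finally have 1: "chain_dist (X, d, S) z' w' \<le> chain_dist (X, d, S) z w" .
    have "chain_dist (X, d, S) z w \<le> chain_dist (X, d, S) z' w" using cd_inv_l h sim_sym w by blast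
    also have "\<dots> \<le> chain_dist (X, d, S) z' w'" using cd_inv_r h by blast
    finally show "c \<in> {chain_dist (X, d, S) z w}" using 1 h by simp
  next
    fix c assume "c \<in> {chain_dist (X, d, S) z w}"
    then show "c \<in> {chain_dist (X, d, S) z' w' | z' w'. z' \<in> NN \<times> X \<and> w' \<in> NN \<times> X \<and>
                     ten_elt (X, d, S) (fst z') (snd z') = ten_elt (X, d, S) (fst z) (snd z) \<and>
                     ten_elt (X, d, S) (fst w') (snd w') = ten_elt (X, d, S) (fst w) (snd w)}"
      using z w by blast
  qed
  then show ?thesis unfolding tensor_d by simp
qed

lemma S'_rep:
  assumes q: "q \<in> M0"
  shows "\<exists>n\<in>NN. cell n q \<and> (3 * fst q - real (fst n), 3 * snd q - real (snd n)) \<in> M0 \<and>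
     snd (snd (tensor (X, d, S))) q = ten_elt (X, d, S) n (S (3 * fst q - real (fst n), 3 * snd q - real (snd n)))"
proof -
  let ?n = "SOME n. n \<in> NN \<and> cell n q"
  have "\<exists>n. n \<in> NN \<and> cell n q" using cell_exists[of "fst q" "snd q"] M0_box[OF q] by auto
  then have n: "?n \<in> NN \<and> cell ?n q" by (rule someI_ex)
  then show ?thesis using M0_local[OF q] unfolding tensor_S Let_def by (intro bexI[of _ ?n]) auto
qed

lemma INV_tensor: "INV (fst (tensor (X, d, S))) (fst (snd (tensor (X, d, S)))) (snd (snd (tensor (X, d, S))))"
proof -
  have SX: "S ` M0 \<subseteq> X" and inj: "inj_on S M0" using inv_SX inv_inj by auto
  let ?X' = "fst (tensor (X, d, S))" and ?d' = "fst (snd (tensor (X, d, S)))" and ?S' = "snd (snd (tensor (X, d, S)))"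
  have mem: "a \<in> ?X' \<longleftrightarrow> (\<exists>z\<in>NN \<times> X. a = ten_elt (X, d, S) (fst z) (snd z))" for a
    unfolding tensor_X by force
  have 1: "\<forall>x\<in>?X'. x \<noteq> {}" using mem ten_ne by blast
  have 2: "\<forall>x\<in>?X'. \<forall>y\<in>?X'. x \<inter> y \<noteq> {} \<longrightarrow> x = y"
  proof (intro ballI impI)
    fix x y assume "x \<in> ?X'" "y \<in> ?X'" "x \<inter> y \<noteq> {}"
    then obtain z w c where "z \<in> NN \<times> X" "w \<in> NN \<times> X" "x = ten_elt (X, d, S) (fst z) (snd z)"
      "y = ten_elt (X, d, S) (fst w) (snd w)" "c \<in> x" "c \<in> y" unfolding mem by blast
    then show "x = y" using DJ ten_eq_sim by blast
  qed
  have 3: "\<forall>x\<in>?X'. \<forall>y\<in>?X'. 0 \<le> ?d' x y"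
  proof (intro ballI)
    fix x y assume "x \<in> ?X'" "y \<in> ?X'"
    then obtain z w where "z \<in> NN \<times> X" "w \<in> NN \<times> X" "x = ten_elt (X, d, S) (fst z) (snd z)"
      "y = ten_elt (X, d, S) (fst w) (snd w)" unfolding mem by blast
    then show "0 \<le> ?d' x y" using DL cd_nonneg[OF dnn] by simp
  qed
  have 4: "\<forall>x\<in>?X'. ?d' x x = 0"
  proof (intro ballI)
    fix x assume "x \<in> ?X'"
    then obtain z where "z \<in> NN \<times> X" "x = ten_elt (X, d, S) (fst z) (snd z)" unfolding mem by blast
    then show "?d' x x = 0" using DL cd_refl[OF dnn] by simp
  qed
  have 5: "\<forall>x\<in>?X'. \<forall>y\<in>?X'. \<forall>z\<in>?X'. ?d' x z \<le> ?d' x y + ?d' y z"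
  proof (intro ballI)
    fix x y u assume "x \<in> ?X'" "y \<in> ?X'" "u \<in> ?X'"
    then obtain z w v where "z \<in> NN \<times> X" "w \<in> NN \<times> X" "v \<in> NN \<times> X" "x = ten_elt (X, d, S) (fst z) (snd z)"
      "y = ten_elt (X, d, S) (fst w) (snd w)" "u = ten_elt (X, d, S) (fst v) (snd v)" unfolding mem by blast
    then show "?d' x u \<le> ?d' x y + ?d' y u" using DL cd_trans[OF dnn] by simp
  qed
  have 6: "?S' ` M0 \<subseteq> ?X'"
  proof
    fix a assume "a \<in> ?S' ` M0"
    then obtain q where q: "q \<in> M0" "a = ?S' q" by blast
    then obtain n where "n \<in> NN" "(3 * fst q - real (fst n), 3 * snd q - real (snd n)) \<in> M0"
      "a = ten_elt (X, d, S) n (S (3 * fst q - real (fst n), 3 * snd q - real (snd n)))"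
      using S'_rep by blast
    then show "a \<in> ?X'" unfolding tensor_X using SX by blast
  qed
  have 7: "inj_on ?S' M0"
  proof (rule inj_onI)
    fix q q' assume q: "q \<in> M0" and q': "q' \<in> M0" and e: "?S' q = ?S' q'"
    obtain n where n: "n \<in> NN" "(3 * fst q - real (fst n), 3 * snd q - real (snd n)) \<in> M0"
      "?S' q = ten_elt (X, d, S) n (S (3 * fst q - real (fst n), 3 * snd q - real (snd n)))"
      using S'_rep[OF q] by blast
    obtain n' where n': "n' \<in> NN" "(3 * fst q' - real (fst n'), 3 * snd q' - real (snd n')) \<in> M0"
      "?S' q' = ten_elt (X, d, S) n' (S (3 * fst q' - real (fst n'), 3 * snd q' - real (snd n')))"
      using S'_rep[OF q'] by blast
    let ?z = "(n, S (3 * fst q - real (fst n), 3 * snd q - real (snd n)))"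
    let ?w = "(n', S (3 * fst q' - real (fst n'), 3 * snd q' - real (snd n')))"
    have "?z \<in> NN \<times> X" using n SX by auto
    then have r: "(?z, ?w) \<in> sim_rel X S" using ten_eq_iff[of ?z ?w] e n n' by simp
    from sim_struct[OF inj r] show "q = q'"
    proof
      assume "?z = ?w"
      then have "n = n'" "S (3 * fst q - real (fst n), 3 * snd q - real (snd n)) = S (3 * fst q' - real (fst n'), 3 * snd q' - real (snd n'))"
        by auto
      then have "(3 * fst q - real (fst n), 3 * snd q - real (snd n)) = (3 * fst q' - real (fst n'), 3 * snd q' - real (snd n'))"
        using inj n n' inj_onD by metis
      then show ?thesis using \<open>n = n'\<close> by (simp add: prod_eq_iff)
    next
      assume "\<exists>qa\<in>M0. \<exists>qb\<in>M0. snd ?z = S qa \<and> snd ?w = S qb \<and>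
            real (fst (fst ?z)) + fst qa = real (fst (fst ?w)) + fst qb \<and>
            real (snd (fst ?z)) + snd qa = real (snd (fst ?w)) + snd qb"
      then obtain qa qb where h: "qa \<in> M0" "qb \<in> M0" "S (3 * fst q - real (fst n), 3 * snd q - real (snd n)) = S qa"
        "S (3 * fst q' - real (fst n'), 3 * snd q' - real (snd n')) = S qb"
        "real (fst n) + fst qa = real (fst n') + fst qb" "real (snd n) + snd qa = real (snd n') + snd qb"
        by auto
      have "qa = (3 * fst q - real (fst n), 3 * snd q - real (snd n))" using h n inj inj_onD by metis
      moreover have "qb = (3 * fst q' - real (fst n'), 3 * snd q' - real (snd n'))" using h n' inj inj_onD by metis
      ultimately show ?thesis using h by (simp add: prod_eq_iff)
    qed
  qed
  show ?thesis unfolding INV_def using 1 2 3 4 5 6 7 by blast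
qed

end

definition l1 :: "real \<times> real \<Rightarrow> real \<times> real \<Rightarrow> real" where
  "l1 g h = \<bar>fst g - fst h\<bar> + \<bar>snd g - snd h\<bar>"

definition gl :: "nat \<times> nat \<Rightarrow> real \<times> real \<Rightarrow> real \<times> real" where
  "gl n g = ((real (fst n) + fst g) / 3, (real (snd n) + snd g) / 3)"

definition box :: "(real \<times> real) set" where
  "box = {g. 0 \<le> fst g \<and> fst g \<le> 1 \<and> 0 \<le> snd g \<and> snd g \<le> 1}"

lemma l1_tri: "l1 a c \<le> l1 a b + l1 b c"
  unfolding l1_def by linarith

lemma l1_gl: "l1 (gl n a) (gl n b) = l1 a b / 3"
  unfolding l1_def gl_def by (simp add: abs_div_pos[symmetric] diff_divide_distrib[symmetric]) 

lemma l1_box: "a \<in> box \<Longrightarrow> b \<in> box \<Longrightarrow> l1 a b \<le> 2"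
  unfolding l1_def box_def by auto

lemma gl_box: "n \<in> NN \<Longrightarrow> g \<in> box \<Longrightarrow> gl n g \<in> box"
  unfolding NN_def box_def gl_def by auto

lemma M0_in_box: "q \<in> M0 \<Longrightarrow> q \<in> box"
  unfolding M0_def box_def by auto

lemma CC:
  fixes X :: "'b enc set" and d :: "'b enc \<Rightarrow> 'b enc \<Rightarrow> real" and S :: "real \<times> real \<Rightarrow> 'b enc"
    and LH :: "'b enc \<Rightarrow> real \<times> real \<Rightarrow> bool"
  assumes inv: "INV X d S"
    and LB: "\<And>x y g h. LH x g \<Longrightarrow> LH y h \<Longrightarrow> l1 g h \<le> d x y"
    and LHm: "\<And>x g. LH x g \<Longrightarrow> x \<in> X \<and> g \<in> box"
    and LHS: "\<And>q. q \<in> M0 \<Longrightarrow> LH (S q) q"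
    and yh: "LH y' h'" and m: "m \<in> NN"
  shows "zs \<noteq> [] \<Longrightarrow> set zs \<subseteq> NN \<times> X \<Longrightarrow> last zs = (m, y') \<Longrightarrow> hd zs = (n, x) \<Longrightarrow> LH x0 g0 \<Longrightarrow>
     l1 (gl n g0) (gl m h') \<le> d x0 x / 3 + csum (X, d, S) zs"
proof (induction zs arbitrary: n x x0 g0)
  case Nil then show ?case by simp
next
  case (Cons a zs)
  have dnn: "\<forall>x\<in>X. \<forall>y\<in>X. 0 \<le> d x y" using inv unfolding INV_def by simp
  have d0: "\<And>x. x \<in> X \<Longrightarrow> d x x = 0" using inv unfolding INV_def by simp
  have tri: "\<And>x y z. x \<in> X \<Longrightarrow> y \<in> X \<Longrightarrow> z \<in> X \<Longrightarrow> d x z \<le> d x y + d y z"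
    using inv unfolding INV_def by simp
  have inj: "inj_on S M0" using inv unfolding INV_def by simp
  have a: "a = (n, x)" using Cons.prems by simp
  have x0X: "x0 \<in> X" and g0b: "g0 \<in> box" using LHm[OF Cons.prems(5)] by auto
  show ?case
  proof (cases zs)
    case Nil
    then have "n = m" "x = y'" using Cons.prems a by auto
    then show ?thesis using LB[OF Cons.prems(5) yh] Nil a by (simp add: l1_gl)
  next
    fix b rest assume Cons2: "zs = b # rest"
    obtain m1 x1 where b: "b = (m1, x1)" by (cases b) blast
    have bX: "m1 \<in> NN" "x1 \<in> X" using Cons.prems(2) Cons2 b by auto
    have aX: "n \<in> NN" "x \<in> X" using Cons.prems(2) a by auto
    have IH: "\<And>x0 g0. LH x0 g0 \<Longrightarrow> l1 (gl m1 g0) (gl m h') \<le> d x0 x1 / 3 + csum (X, d, S) zs"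
      using Cons.IH Cons.prems Cons2 b by simp
    have cs: "csum (X, d, S) (a # zs) = step_cost (X, d, S) a b + csum (X, d, S) zs" using Cons2 by simp
    have csnn: "0 \<le> csum (X, d, S) zs" using csum_nonneg[OF dnn] Cons.prems(2) by auto
    show ?thesis
    proof (cases "(a, b) \<in> sim_rel X S")
      case True
      then have sc: "step_cost (X, d, S) a b = 0" by (simp add: step_cost_def)
      from sim_struct[OF inj True] show ?thesis
      proof
        assume "a = b"
        then have "n = m1" "x = x1" using a b by auto
        then show ?thesis using IH[OF Cons.prems(5)] cs sc by simp
      next
        assume "\<exists>q\<in>M0. \<exists>q'\<in>M0. snd a = S q \<and> snd b = S q' \<and>
            real (fst (fst a)) + fst q = real (fst (fst b)) + fst q' \<and>
            real (snd (fst a)) + snd q = real (snd (fst b)) + snd q'"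
        then obtain q q' where qq: "q \<in> M0" "q' \<in> M0" "x = S q" "x1 = S q'" "gl n q = gl m1 q'"
          using a b by (auto simp: gl_def)
        have 1: "l1 (gl m1 q') (gl m h') \<le> csum (X, d, S) zs"
          using IH[OF LHS[OF qq(2)]] d0[OF bX(2)] qq by simp
        have 2: "l1 g0 q \<le> d x0 x" using LB[OF Cons.prems(5) LHS[OF qq(1)]] qq by simp
        have "l1 (gl n g0) (gl m h') \<le> l1 (gl n g0) (gl n q) + l1 (gl n q) (gl m h')" by (rule l1_tri)
        moreover have "l1 (gl n g0) (gl n q) = l1 g0 q / 3" by (rule l1_gl)
        ultimately show ?thesis using 1 2 qq cs sc by simp
      qed
    next
      case False
      then have sc: "step_cost (X, d, S) a b = pre_dist d a b" by (simp add: step_cost_def)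
      show ?thesis
      proof (cases "n = m1")
        case True
        then have "step_cost (X, d, S) a b = d x x1 / 3" using sc a b by (simp add: pre_dist_def)
        moreover have "d x0 x1 \<le> d x0 x + d x x1" using tri x0X aX bX by blast
        ultimately show ?thesis using IH[OF Cons.prems(5)] cs True by simp
      next
        case False
        then have "step_cost (X, d, S) a b = 2" using sc a b by (simp add: pre_dist_def)
        moreover have "l1 (gl n g0) (gl m h') \<le> 2"
          using l1_box gl_box aX m g0b LHm[OF yh] by blast
        moreover have "0 \<le> d x0 x" using dnn x0X aX by blast
        ultimately show ?thesis using cs csnn by simp
      qed
    qed
  qed
qed

definition Xl :: "nat \<Rightarrow> 'b sqms \<Rightarrow> 'b enc set" where "Xl p B = fst (tensor_pow p B)"
definition dl :: "nat \<Rightarrow> 'b sqms \<Rightarrow> 'b enc \<Rightarrow> 'b enc \<Rightarrow> real" where "dl p B = fst (snd (tensor_pow p B))"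
definition Sl :: "nat \<Rightarrow> 'b sqms \<Rightarrow> real \<times> real \<Rightarrow> 'b enc" where "Sl p B = snd (snd (tensor_pow p B))"

lemma tp_eq: "tensor_pow p B = (Xl p B, dl p B, Sl p B)"
  unfolding Xl_def dl_def Sl_def by simp

lemma tp_Suc: "tensor_pow (Suc p) B = tensor (Xl p B, dl p B, Sl p B)"
  by (simp add: tp_eq[symmetric])

lemma Xl_Suc: "Xl (Suc p) B = fst (tensor (Xl p B, dl p B, Sl p B))"
  by (simp only: Xl_def[of "Suc p" B] tp_Suc)
lemma dl_Suc: "dl (Suc p) B = fst (snd (tensor (Xl p B, dl p B, Sl p B)))"
  by (simp only: dl_def[of "Suc p" B] tp_Suc)
lemma Sl_Suc: "Sl (Suc p) B = snd (snd (tensor (Xl p B, dl p B, Sl p B)))"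
  by (simp only: Sl_def[of "Suc p" B] tp_Suc)

lemma Xl_0: "Xl 0 (B0, dB, SB) = (\<lambda>b. {([], b)}) ` B0" by (simp add: Xl_def base_enc_def)
lemma dl_0: "dl 0 (B0, dB, SB) = (\<lambda>a c. dB (snd (the_elem a)) (snd (the_elem c)))" by (simp add: dl_def base_enc_def)
lemma Sl_0: "Sl 0 (B0, dB, SB) = (\<lambda>q. {([], SB q)})" by (simp add: Sl_def base_enc_def)

fun GHC :: "nat \<Rightarrow> 'b sqms \<Rightarrow> 'b enc \<Rightarrow> real \<times> real \<Rightarrow> bool" where
  "GHC 0 B x g = (fst g \<in> {0, 1} \<and> snd g \<in> {0, 1} \<and> x = {([], snd (snd B) g)})"
| "GHC (Suc p) B x g = (\<exists>n\<in>NN. \<exists>x' g'. GHC p B x' g' \<and> x = ten_elt (tensor_pow p B) n x' \<and> g = gl n g')"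

definition grid :: "nat \<Rightarrow> real \<times> real \<Rightarrow> bool" where
  "grid p g \<longleftrightarrow> (\<exists>a b :: nat. g = (real a / 3 ^ p, real b / 3 ^ p))"

definition LHC :: "nat \<Rightarrow> 'b sqms \<Rightarrow> 'b enc \<Rightarrow> real \<times> real \<Rightarrow> bool" where
  "LHC p B x g \<longleftrightarrow> GHC p B x g \<or> (g \<in> M0 \<and> x = Sl p B g)"

lemma corner_M0: "fst g \<in> {0, 1} \<Longrightarrow> snd g \<in> {0, 1} \<Longrightarrow> g \<in> M0"
  unfolding M0_def by (cases g) auto

context
  fixes B0 :: "'b set" and dB :: "'b \<Rightarrow> 'b \<Rightarrow> real" and SB :: "real \<times> real \<Rightarrow> 'b"
  assumes sq: "square_ms B0 dB SB"
begin

lemma ms: "Metric_space B0 dB" using sq unfolding square_ms_def by simp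
lemma SB_in: "q \<in> M0 \<Longrightarrow> SB q \<in> B0" using sq unfolding square_ms_def by auto
lemma SB_inj: "inj_on SB M0" using sq unfolding square_ms_def by simp
lemma sq1: "i \<in> {0, 1} \<Longrightarrow> r \<in> {0..1} \<Longrightarrow> s \<in> {0..1} \<Longrightarrow>
    dB (SB (i, r)) (SB (i, s)) = \<bar>s - r\<bar> \<and> dB (SB (r, i)) (SB (s, i)) = \<bar>s - r\<bar>"
  using sq unfolding square_ms_def by blast
lemma sq2: "p \<in> M0 \<Longrightarrow> q \<in> M0 \<Longrightarrow> dB (SB p) (SB q) \<ge> \<bar>fst p - fst q\<bar> + \<bar>snd p - snd q\<bar>"
  using sq unfolding square_ms_def by blast

lemma INV_pow: "INV (Xl p (B0, dB, SB)) (dl p (B0, dB, SB)) (Sl p (B0, dB, SB))"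
proof (induction p)
  case 0
  have "Metric_space B0 dB" by (rule ms)
  have 1: "\<forall>x\<in>(\<lambda>b. {([], b)}) ` B0. x \<noteq> {}" by auto
  have 2: "\<forall>x\<in>(\<lambda>b. {([], b)}) ` B0. \<forall>y\<in>(\<lambda>b. {([], b)}) ` B0. x \<inter> y \<noteq> {} \<longrightarrow> x = y" by auto
  have 3: "\<forall>x\<in>(\<lambda>b. {([], b)}) ` B0. \<forall>y\<in>(\<lambda>b. {([], b)}) ` B0. 0 \<le> dB (snd (the_elem x)) (snd (the_elem y))"
    using Metric_space.nonneg[OF ms] by auto
  have 4: "\<forall>x\<in>(\<lambda>b. {([], b)}) ` B0. dB (snd (the_elem x)) (snd (the_elem x)) = 0"
    using Metric_space.zero[OF ms] by auto
  have 5: "\<forall>x\<in>(\<lambda>b. {([], b)}) ` B0. \<forall>y\<in>(\<lambda>b. {([], b)}) ` B0. \<forall>z\<in>(\<lambda>b. {([], b)}) ` B0.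
      dB (snd (the_elem x)) (snd (the_elem z)) \<le> dB (snd (the_elem x)) (snd (the_elem y)) + dB (snd (the_elem y)) (snd (the_elem z))"
    using Metric_space.triangle[OF ms] by auto
  have 6: "(\<lambda>q. {([], SB q)}) ` M0 \<subseteq> (\<lambda>b. {([], b)}) ` B0" using SB_in by auto
  have 7: "inj_on (\<lambda>q. {([], SB q)}) M0" using SB_inj unfolding inj_on_def by auto
  show ?case unfolding INV_def Xl_0 dl_0 Sl_0 using 1 2 3 4 5 6 7 by blast
next
  case (Suc p)
  then show ?case unfolding Xl_Suc dl_Suc Sl_Suc by (rule INV_tensor)
qed

lemma GHC_mem: "GHC p (B0, dB, SB) x g \<Longrightarrow> x \<in> Xl p (B0, dB, SB) \<and> g \<in> box \<and> grid p g"
proof (induction p arbitrary: x g)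
  case 0
  then have "g \<in> M0" using corner_M0 by auto
  moreover obtain a b where "g = (a, b)" by force
  ultimately show ?case using 0 SB_in unfolding Xl_0 box_def grid_def
    by (auto intro: exI[of _ 0] exI[of _ 1])
next
  case (Suc p)
  then obtain n x' g' where h: "n \<in> NN" "GHC p (B0, dB, SB) x' g'"
    "x = ten_elt (Xl p (B0, dB, SB), dl p (B0, dB, SB), Sl p (B0, dB, SB)) n x'" "g = gl n g'"
    using tp_eq by (metis GHC.simps(2))
  have IH: "x' \<in> Xl p (B0, dB, SB)" "g' \<in> box" "grid p g'" using Suc.IH[OF h(2)] by auto
  have "x \<in> Xl (Suc p) (B0, dB, SB)" unfolding Xl_Suc tensor_X using h IH by blast
  moreover have "g \<in> box" using gl_box h IH by simp
  moreover have "grid (Suc p) g"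
  proof -
    obtain a b :: nat where ab: "g' = (real a / 3 ^ p, real b / 3 ^ p)" using IH unfolding grid_def by blast
    have "g = (real (fst n * 3 ^ p + a) / 3 ^ Suc p, real (snd n * 3 ^ p + b) / 3 ^ Suc p)"
      using h(4) ab unfolding gl_def by (simp add: field_simps)
    then show ?thesis unfolding grid_def by blast
  qed
  ultimately show ?case by blast
qed

lemma LHC_mem: "LHC p (B0, dB, SB) x g \<Longrightarrow> x \<in> Xl p (B0, dB, SB) \<and> g \<in> box"
proof -
  assume h: "LHC p (B0, dB, SB) x g"
  have "Sl p (B0, dB, SB) ` M0 \<subseteq> Xl p (B0, dB, SB)" using INV_pow[of p] unfolding INV_def by simp
  then show ?thesis using h GHC_mem M0_in_box unfolding LHC_def by blast
qed

lemma LHC_S: "q \<in> M0 \<Longrightarrow> LHC p (B0, dB, SB) (Sl p (B0, dB, SB) q) q"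
  unfolding LHC_def by simp

lemma LHC_rep:
  assumes "LHC (Suc p) (B0, dB, SB) x g"
  shows "\<exists>n\<in>NN. \<exists>x' g'. LHC p (B0, dB, SB) x' g' \<and>
     x = ten_elt (Xl p (B0, dB, SB), dl p (B0, dB, SB), Sl p (B0, dB, SB)) n x' \<and> g = gl n g'"
  using assms[unfolded LHC_def]
proof (elim disjE)
  assume "GHC (Suc p) (B0, dB, SB) x g"
  then show ?thesis using tp_eq unfolding LHC_def by (metis GHC.simps(2))
next
  assume h: "g \<in> M0 \<and> x = Sl (Suc p) (B0, dB, SB) g"
  obtain n where n: "n \<in> NN" "(3 * fst g - real (fst n), 3 * snd g - real (snd n)) \<in> M0"
    "x = ten_elt (Xl p (B0, dB, SB), dl p (B0, dB, SB), Sl p (B0, dB, SB)) n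
            (Sl p (B0, dB, SB) (3 * fst g - real (fst n), 3 * snd g - real (snd n)))"
    using S'_rep[OF INV_pow[of p]] h unfolding Sl_Suc by blast
  moreover have "g = gl n (3 * fst g - real (fst n), 3 * snd g - real (snd n))"
    unfolding gl_def by simp
  ultimately show ?thesis unfolding LHC_def by blast
qed

lemma LB: "LHC p (B0, dB, SB) x g \<Longrightarrow> LHC p (B0, dB, SB) y h \<Longrightarrow> l1 g h \<le> dl p (B0, dB, SB) x y"
proof (induction p arbitrary: x y g h)
  case 0
  have "\<And>x g. LHC 0 (B0, dB, SB) x g \<Longrightarrow> g \<in> M0 \<and> x = {([], SB g)}"
    unfolding LHC_def Sl_0 using corner_M0 by auto
  then have "g \<in> M0" "x = {([], SB g)}" "h \<in> M0" "y = {([], SB h)}" using 0 by auto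
  then show ?case unfolding dl_0 l1_def using sq2 by simp
next
  case (Suc p)
  let ?X = "Xl p (B0, dB, SB)" and ?d = "dl p (B0, dB, SB)" and ?S = "Sl p (B0, dB, SB)"
  have inv: "INV ?X ?d ?S" by (rule INV_pow)
  obtain n x' g' where x: "n \<in> NN" "LHC p (B0, dB, SB) x' g'" "x = ten_elt (?X, ?d, ?S) n x'" "g = gl n g'"
    using LHC_rep[OF Suc.prems(1)] by blast
  obtain m y' h' where y: "m \<in> NN" "LHC p (B0, dB, SB) y' h'" "y = ten_elt (?X, ?d, ?S) m y'" "h = gl m h'"
    using LHC_rep[OF Suc.prems(2)] by blast
  have x'X: "x' \<in> ?X" and y'X: "y' \<in> ?X" using LHC_mem x y by auto
  have "dl (Suc p) (B0, dB, SB) x y = chain_dist (?X, ?d, ?S) (n, x') (m, y')"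
    unfolding dl_Suc using DL[OF inv, of "(n, x')" "(m, y')"] x y x'X y'X by simp
  moreover have "l1 g h \<le> chain_dist (?X, ?d, ?S) (n, x') (m, y')"
  proof (rule cd_ge)
    show "\<forall>x\<in>?X. \<forall>y\<in>?X. 0 \<le> ?d x y" using inv unfolding INV_def by simp
    show "(n, x') \<in> NN \<times> ?X" "(m, y') \<in> NN \<times> ?X" using x y x'X y'X by auto
  next
    fix s assume "s \<in> CS (?X, ?d, ?S) (n, x') (m, y')"
    then obtain zs where zs: "zs \<noteq> []" "hd zs = (n, x')" "last zs = (m, y')" "set zs \<subseteq> NN \<times> ?X"
      "s = csum (?X, ?d, ?S) zs" unfolding CS_def by auto
    have "l1 (gl n g') (gl m h') \<le> ?d x' x' / 3 + csum (?X, ?d, ?S) zs"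
      using CC[OF inv, of "LHC p (B0, dB, SB)", OF Suc.IH LHC_mem LHC_S y(2) y(1) zs(1) zs(4) zs(3) zs(2) x(2)]
      by blast
    moreover have "?d x' x' = 0" using inv x'X unfolding INV_def by simp
    ultimately show "l1 g h \<le> s" using x y zs by simp
  qed
  ultimately show ?case by simp
qed

end

definition cdist :: "nat \<times> nat \<Rightarrow> nat \<times> nat \<Rightarrow> nat" where
  "cdist n m = (if fst n \<le> fst m then fst m - fst n else fst n - fst m) +
               (if snd n \<le> snd m then snd m - snd n else snd n - snd m)"

lemma grid_shift:
  fixes a n :: nat
  assumes "real n / 3 \<le> real a / 3 ^ Suc p"
  shows "3 * (real a / 3 ^ Suc p) - real n = real (a - n * 3 ^ p) / 3 ^ p"
proof -
  have "real n * 3 ^ p \<le> real a" using assms by (simp add: field_simps)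
  then have "n * 3 ^ p \<le> a" by (metis of_nat_le_iff of_nat_mult of_nat_numeral of_nat_power)
  then have "real (a - n * 3 ^ p) = real a - real n * 3 ^ p" by (simp add: of_nat_diff)
  then show ?thesis by (simp add: field_simps)
qed

lemma ar1:
  fixes g1 h1 A M c :: real
  assumes "0 \<le> g1" "g1 \<le> 1" "0 \<le> h1" "A + 1 \<le> M"
  shows "\<bar>g1 - 1\<bar> / 3 + (\<bar>(A + 1) / 3 - (M + h1) / 3\<bar> + c) \<le> \<bar>(A + g1) / 3 - (M + h1) / 3\<bar> + c"
proof -
  have "\<bar>g1 - 1\<bar> = 1 - g1" using assms by simp
  moreover have "\<bar>(A + 1) / 3 - (M + h1) / 3\<bar> = (M + h1 - A - 1) / 3" using assms by (simp add: abs_if field_simps)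
  moreover have "\<bar>(A + g1) / 3 - (M + h1) / 3\<bar> = (M + h1 - A - g1) / 3" using assms by (simp add: abs_if field_simps)
  ultimately show ?thesis by (simp add: field_simps)
qed
lemma ar2:
  fixes g1 h1 A M c :: real
  assumes "0 \<le> g1" "h1 \<le> 1" "0 \<le> h1" "M + 1 \<le> A"
  shows "\<bar>g1\<bar> / 3 + (\<bar>(A - 1 + 1) / 3 - (M + h1) / 3\<bar> + c) \<le> \<bar>(A + g1) / 3 - (M + h1) / 3\<bar> + c"
proof -
  have "\<bar>g1\<bar> = g1" using assms by simp
  moreover have "\<bar>(A - 1 + 1) / 3 - (M + h1) / 3\<bar> = (A - M - h1) / 3" using assms by (simp add: abs_if field_simps)
  moreover have "\<bar>(A + g1) / 3 - (M + h1) / 3\<bar> = (A + g1 - M - h1) / 3" using assms by (simp add: abs_if field_simps)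
  ultimately show ?thesis by (simp add: field_simps)
qed

context
  fixes B0 :: "'b set" and dB :: "'b \<Rightarrow> 'b \<Rightarrow> real" and SB :: "real \<times> real \<Rightarrow> 'b"
  assumes sq: "square_ms B0 dB SB"
begin

lemma GS: "r \<in> M0 \<Longrightarrow> grid p r \<Longrightarrow> GHC p (B0, dB, SB) (Sl p (B0, dB, SB) r) r"
proof (induction p arbitrary: r)
  case 0
  obtain a b :: nat where ab: "r = (real a, real b)" using 0(2) unfolding grid_def by auto
  then have "a \<le> 1" "b \<le> 1" using 0(1) unfolding M0_def by auto
  then have "fst r \<in> {0, 1}" "snd r \<in> {0, 1}" using ab by auto
  then show ?case unfolding Sl_0 by simp
next
  case (Suc p)
  obtain n where n: "n \<in> NN" "cell n r" "(3 * fst r - real (fst n), 3 * snd r - real (snd n)) \<in> M0"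
    "Sl (Suc p) (B0, dB, SB) r = ten_elt (Xl p (B0, dB, SB), dl p (B0, dB, SB), Sl p (B0, dB, SB)) n
            (Sl p (B0, dB, SB) (3 * fst r - real (fst n), 3 * snd r - real (snd n)))"
    using S'_rep[OF INV_pow[OF sq, of p] Suc.prems(1)] unfolding Sl_Suc by blast
  obtain a b :: nat where ab: "r = (real a / 3 ^ Suc p, real b / 3 ^ Suc p)" using Suc.prems(2) unfolding grid_def by blast
  have c: "real (fst n) / 3 \<le> real a / 3 ^ Suc p" "real (snd n) / 3 \<le> real b / 3 ^ Suc p"
    using n(2) ab unfolding cell_def by auto
  have "grid p (3 * fst r - real (fst n), 3 * snd r - real (snd n))"
    unfolding grid_def using ab grid_shift[OF c(1)] grid_shift[OF c(2)] by auto
  then have "GHC p (B0, dB, SB) (Sl p (B0, dB, SB) (3 * fst r - real (fst n), 3 * snd r - real (snd n)))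
      (3 * fst r - real (fst n), 3 * snd r - real (snd n))" using Suc.IH n(3) by blast
  moreover have "r = gl n (3 * fst r - real (fst n), 3 * snd r - real (snd n))" unfolding gl_def by simp
  ultimately show ?case using n tp_eq[of p "(B0, dB, SB)"] by (simp only: GHC.simps) blast
qed

lemma SAME:
  assumes IH: "\<And>x y g h. GHC p (B0, dB, SB) x g \<Longrightarrow> GHC p (B0, dB, SB) y h \<Longrightarrow> dl p (B0, dB, SB) x y \<le> l1 g h"
    and n: "n \<in> NN" and x: "GHC p (B0, dB, SB) x' g'" and y: "GHC p (B0, dB, SB) y' h'"
  shows "dl (Suc p) (B0, dB, SB) (ten_elt (Xl p (B0, dB, SB), dl p (B0, dB, SB), Sl p (B0, dB, SB)) n x')
            (ten_elt (Xl p (B0, dB, SB), dl p (B0, dB, SB), Sl p (B0, dB, SB)) n y') \<le> l1 (gl n g') (gl n h')"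
proof -
  let ?X = "Xl p (B0, dB, SB)" and ?d = "dl p (B0, dB, SB)" and ?S = "Sl p (B0, dB, SB)"
  have inv: "INV ?X ?d ?S" by (rule INV_pow[OF sq])
  have dnn: "\<forall>x\<in>?X. \<forall>y\<in>?X. 0 \<le> ?d x y" using inv unfolding INV_def by simp
  have xX: "x' \<in> ?X" and yX: "y' \<in> ?X" using GHC_mem[OF sq] x y by auto
  have "dl (Suc p) (B0, dB, SB) (ten_elt (?X, ?d, ?S) n x') (ten_elt (?X, ?d, ?S) n y')
      = chain_dist (?X, ?d, ?S) (n, x') (n, y')"
    unfolding dl_Suc using DL[OF inv, of "(n, x')" "(n, y')"] n xX yX by simp
  also have "\<dots> \<le> step_cost (?X, ?d, ?S) (n, x') (n, y')" using cd_step[OF dnn] n xX yX by simp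
  also have "\<dots> \<le> pre_dist ?d (n, x') (n, y')" using step_cost_le[OF dnn] n xX yX by simp
  also have "\<dots> = ?d x' y' / 3" unfolding pre_dist_def by simp
  also have "\<dots> \<le> l1 g' h' / 3" using IH[OF x y] by simp
  also have "\<dots> = l1 (gl n g') (gl n h')" by (simp add: l1_gl)
  finally show ?thesis .
qed

lemma CROSS:
  assumes IH: "\<And>x y g h. GHC p (B0, dB, SB) x g \<Longrightarrow> GHC p (B0, dB, SB) y h \<Longrightarrow> dl p (B0, dB, SB) x y \<le> l1 g h"
    and x: "GHC p (B0, dB, SB) x' g'" and y: "GHC p (B0, dB, SB) y' h'"
    and nn: "n \<in> NN" "m \<in> NN" "n'' \<in> NN" "adjacent n n''"
    and r: "r \<in> M0" "r'' \<in> M0" "grid p r" "grid p r''" "gl n r = gl n'' r''"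
    and IHn: "dl (Suc p) (B0, dB, SB) (ten_elt (Xl p (B0, dB, SB), dl p (B0, dB, SB), Sl p (B0, dB, SB)) n'' (Sl p (B0, dB, SB) r''))
        (ten_elt (Xl p (B0, dB, SB), dl p (B0, dB, SB), Sl p (B0, dB, SB)) m y') \<le> l1 (gl n'' r'') (gl m h')"
    and ar: "l1 g' r / 3 + l1 (gl n'' r'') (gl m h') \<le> l1 (gl n g') (gl m h')"
  shows "dl (Suc p) (B0, dB, SB) (ten_elt (Xl p (B0, dB, SB), dl p (B0, dB, SB), Sl p (B0, dB, SB)) n x')
            (ten_elt (Xl p (B0, dB, SB), dl p (B0, dB, SB), Sl p (B0, dB, SB)) m y') \<le> l1 (gl n g') (gl m h')"
proof -
  let ?X = "Xl p (B0, dB, SB)" and ?d = "dl p (B0, dB, SB)" and ?S = "Sl p (B0, dB, SB)"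
  let ?t = "ten_elt (?X, ?d, ?S)"
  have inv: "INV ?X ?d ?S" by (rule INV_pow[OF sq])
  have inv': "INV (Xl (Suc p) (B0, dB, SB)) (dl (Suc p) (B0, dB, SB)) (Sl (Suc p) (B0, dB, SB))" by (rule INV_pow[OF sq])
  have SX: "?S ` M0 \<subseteq> ?X" using inv unfolding INV_def by simp
  have xX: "x' \<in> ?X" and yX: "y' \<in> ?X" using GHC_mem[OF sq] x y by auto
  have rX: "?S r \<in> ?X" "?S r'' \<in> ?X" using SX r by auto
  have "((n, ?S r), (n'', ?S r'')) \<in> gen_rel ?X ?S"
  proof -
    have e: "real (fst n) + fst r = real (fst n'') + fst r''" "real (snd n) + snd r = real (snd n'') + snd r''"
      using r(5) unfolding gl_def by (auto simp: prod_eq_iff)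
    show ?thesis unfolding gen_rel_mem
      by (rule exI[of _ n], rule exI[of _ n''], rule exI[of _ r], rule exI[of _ r'']) (use nn r(1,2) e in simp)
  qed
  then have "((n, ?S r), (n'', ?S r'')) \<in> sim_rel ?X ?S" using gen_sim nn rX by blast
  then have E: "?t n (?S r) = ?t n'' (?S r'')" using ten_eq_sim[OF inv] by fastforce
  have mem: "\<And>k z. k \<in> NN \<Longrightarrow> z \<in> ?X \<Longrightarrow> ?t k z \<in> Xl (Suc p) (B0, dB, SB)"
    unfolding Xl_Suc tensor_X by blast
  have "dl (Suc p) (B0, dB, SB) (?t n x') (?t m y') \<le>
      dl (Suc p) (B0, dB, SB) (?t n x') (?t n (?S r)) + dl (Suc p) (B0, dB, SB) (?t n (?S r)) (?t m y')"
  proof -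
    have tri: "\<forall>x\<in>Xl (Suc p) (B0, dB, SB). \<forall>y\<in>Xl (Suc p) (B0, dB, SB). \<forall>z\<in>Xl (Suc p) (B0, dB, SB).
       dl (Suc p) (B0, dB, SB) x z \<le> dl (Suc p) (B0, dB, SB) x y + dl (Suc p) (B0, dB, SB) y z"
      using inv' unfolding INV_def by simp
    have "?t n x' \<in> Xl (Suc p) (B0, dB, SB)" "?t m y' \<in> Xl (Suc p) (B0, dB, SB)" "?t n (?S r) \<in> Xl (Suc p) (B0, dB, SB)"
      using mem nn xX yX rX by auto
    then show ?thesis using tri by blast
  qed
  moreover have "dl (Suc p) (B0, dB, SB) (?t n x') (?t n (?S r)) \<le> l1 (gl n g') (gl n r)"
    using SAME[OF IH nn(1) x GS[OF r(1) r(3)]] .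
  moreover have "l1 (gl n g') (gl n r) = l1 g' r / 3" by (rule l1_gl)
  ultimately show ?thesis using E IHn ar by simp
qed

lemma UB_step:
  assumes IH: "\<And>x y g h. GHC p (B0, dB, SB) x g \<Longrightarrow> GHC p (B0, dB, SB) y h \<Longrightarrow> dl p (B0, dB, SB) x y \<le> l1 g h"
    and y: "GHC p (B0, dB, SB) y' h'" and m: "m \<in> NN"
  shows "n \<in> NN \<Longrightarrow> GHC p (B0, dB, SB) x' g' \<Longrightarrow>
    dl (Suc p) (B0, dB, SB) (ten_elt (Xl p (B0, dB, SB), dl p (B0, dB, SB), Sl p (B0, dB, SB)) n x')
            (ten_elt (Xl p (B0, dB, SB), dl p (B0, dB, SB), Sl p (B0, dB, SB)) m y') \<le> l1 (gl n g') (gl m h')"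
proof (induction "cdist n m" arbitrary: n x' g' rule: less_induct)
  case less
  note n = less.prems(1) and x = less.prems(2)
  have gb: "g' \<in> box" "grid p g'" and hb: "h' \<in> box" using GHC_mem[OF sq] x y by auto
  obtain a b :: nat where ab: "g' = (real a / 3 ^ p, real b / 3 ^ p)" using gb unfolding grid_def by blast
  have gr1: "grid p (1, snd g')" "grid p (0, snd g')" "grid p (fst g', 1)" "grid p (fst g', 0)"
    unfolding grid_def using ab
    by (auto intro!: exI[of _ "3 ^ p"] exI[of _ 0] exI[of _ a] exI[of _ b])
  have M: "(1, snd g') \<in> M0" "(0, snd g') \<in> M0" "(fst g', 1) \<in> M0" "(fst g', 0) \<in> M0"
    using gb unfolding M0_def box_def by auto
  have nm: "fst n \<le> 2" "snd n \<le> 2" "fst m \<le> 2" "snd m \<le> 2" using n m unfolding NN_def by auto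
  show ?case
  proof (cases "n = m")
    case True
    then show ?thesis using SAME[OF IH n x y] by simp
  next
    case False
    then consider "fst n < fst m" | "fst n > fst m" | "snd n < snd m" | "snd n > snd m"
      by (metis linorder_neqE_nat prod_eq_iff)
    then show ?thesis
    proof cases
      case 1
      let ?n = "(Suc (fst n), snd n)"
      have nn: "?n \<in> NN" "adjacent n ?n" using 1 nm unfolding NN_def adjacent_def by auto
      have lt: "cdist ?n m < cdist n m" using 1 unfolding cdist_def by auto
      show ?thesis
      proof (rule CROSS[OF IH x y n m nn M(1) M(2) gr1(1) gr1(2)])
        show "gl n (1, snd g') = gl ?n (0, snd g')" unfolding gl_def by simp
        show "dl (Suc p) (B0, dB, SB) (ten_elt (Xl p (B0, dB, SB), dl p (B0, dB, SB), Sl p (B0, dB, SB)) ?n (Sl p (B0, dB, SB) (0, snd g')))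
          (ten_elt (Xl p (B0, dB, SB), dl p (B0, dB, SB), Sl p (B0, dB, SB)) m y') \<le> l1 (gl ?n (0, snd g')) (gl m h')"
          using less.hyps[OF lt nn(1) GS[OF M(2) gr1(2)]] .
        have "real (fst m) \<ge> real (fst n) + 1" using 1 by simp
        then have A: "real (fst n) + 1 \<le> real (fst m)" by simp
        have b4: "0 \<le> fst g'" "fst g' \<le> 1" "0 \<le> snd g'" "snd g' \<le> 1" "0 \<le> fst h'" "fst h' \<le> 1" "0 \<le> snd h'" "snd h' \<le> 1"
          using gb hb unfolding box_def by auto
        have e1: "l1 g' (1, snd g') = \<bar>fst g' - 1\<bar>" by (simp add: l1_def)
        have e2: "l1 (gl ?n (0, snd g')) (gl m h') = \<bar>(real (fst n) + 1) / 3 - (real (fst m) + fst h') / 3\<bar> + \<bar>(real (snd n) + snd g') / 3 - (real (snd m) + snd h') / 3\<bar>" by (simp add: l1_def gl_def add.commute)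
        have e3: "l1 (gl n g') (gl m h') = \<bar>(real (fst n) + fst g') / 3 - (real (fst m) + fst h') / 3\<bar> + \<bar>(real (snd n) + snd g') / 3 - (real (snd m) + snd h') / 3\<bar>" by (simp add: l1_def gl_def)
        show "l1 g' (1, snd g') / 3 + l1 (gl ?n (0, snd g')) (gl m h') \<le> l1 (gl n g') (gl m h')"
          unfolding e1 e2 e3 by (rule ar1[OF b4(1) b4(2) b4(5) A])
      qed
    next
      case 2
      let ?n = "(fst n - 1, snd n)"
      have nn: "?n \<in> NN" "adjacent n ?n" using 2 nm unfolding NN_def adjacent_def by auto
      have lt: "cdist ?n m < cdist n m" using 2 unfolding cdist_def by auto
      have fn: "real (fst n - 1) = real (fst n) - 1" using 2 by (simp add: of_nat_diff)
      show ?thesis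
      proof (rule CROSS[OF IH x y n m nn M(2) M(1) gr1(2) gr1(1)])
        show "gl n (0, snd g') = gl ?n (1, snd g')" unfolding gl_def using fn by simp
        show "dl (Suc p) (B0, dB, SB) (ten_elt (Xl p (B0, dB, SB), dl p (B0, dB, SB), Sl p (B0, dB, SB)) ?n (Sl p (B0, dB, SB) (1, snd g')))
          (ten_elt (Xl p (B0, dB, SB), dl p (B0, dB, SB), Sl p (B0, dB, SB)) m y') \<le> l1 (gl ?n (1, snd g')) (gl m h')"
          using less.hyps[OF lt nn(1) GS[OF M(1) gr1(1)]] .
        have "real (fst n) \<ge> real (fst m) + 1" using 2 by simp
        then have A: "real (fst m) + 1 \<le> real (fst n)" by simp
        have b4: "0 \<le> fst g'" "fst g' \<le> 1" "0 \<le> snd g'" "snd g' \<le> 1" "0 \<le> fst h'" "fst h' \<le> 1" "0 \<le> snd h'" "snd h' \<le> 1"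
          using gb hb unfolding box_def by auto
        have e1: "l1 g' (0, snd g') = \<bar>fst g'\<bar>" by (simp add: l1_def)
        have e2: "l1 (gl ?n (1, snd g')) (gl m h') = \<bar>(real (fst n) - 1 + 1) / 3 - (real (fst m) + fst h') / 3\<bar> + \<bar>(real (snd n) + snd g') / 3 - (real (snd m) + snd h') / 3\<bar>" using fn by (simp add: l1_def gl_def)
        have e3: "l1 (gl n g') (gl m h') = \<bar>(real (fst n) + fst g') / 3 - (real (fst m) + fst h') / 3\<bar> + \<bar>(real (snd n) + snd g') / 3 - (real (snd m) + snd h') / 3\<bar>" by (simp add: l1_def gl_def)
        show "l1 g' (0, snd g') / 3 + l1 (gl ?n (1, snd g')) (gl m h') \<le> l1 (gl n g') (gl m h')"
          unfolding e1 e2 e3 by (rule ar2[OF b4(1) b4(6) b4(5) A])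
      qed
    next
      case 3
      let ?n = "(fst n, Suc (snd n))"
      have nn: "?n \<in> NN" "adjacent n ?n" using 3 nm unfolding NN_def adjacent_def by auto
      have lt: "cdist ?n m < cdist n m" using 3 unfolding cdist_def by auto
      show ?thesis
      proof (rule CROSS[OF IH x y n m nn M(3) M(4) gr1(3) gr1(4)])
        show "gl n (fst g', 1) = gl ?n (fst g', 0)" unfolding gl_def by simp
        show "dl (Suc p) (B0, dB, SB) (ten_elt (Xl p (B0, dB, SB), dl p (B0, dB, SB), Sl p (B0, dB, SB)) ?n (Sl p (B0, dB, SB) (fst g', 0)))
          (ten_elt (Xl p (B0, dB, SB), dl p (B0, dB, SB), Sl p (B0, dB, SB)) m y') \<le> l1 (gl ?n (fst g', 0)) (gl m h')"
          using less.hyps[OF lt nn(1) GS[OF M(4) gr1(4)]] .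
        have "real (snd m) \<ge> real (snd n) + 1" using 3 by simp
        then have A: "real (snd n) + 1 \<le> real (snd m)" by simp
        have b4: "0 \<le> fst g'" "fst g' \<le> 1" "0 \<le> snd g'" "snd g' \<le> 1" "0 \<le> fst h'" "fst h' \<le> 1" "0 \<le> snd h'" "snd h' \<le> 1"
          using gb hb unfolding box_def by auto
        have e1: "l1 g' (fst g', 1) = \<bar>snd g' - 1\<bar>" by (simp add: l1_def)
        have e2: "l1 (gl ?n (fst g', 0)) (gl m h') = \<bar>(real (snd n) + 1) / 3 - (real (snd m) + snd h') / 3\<bar> + \<bar>(real (fst n) + fst g') / 3 - (real (fst m) + fst h') / 3\<bar>" by (simp add: l1_def gl_def add.commute)
        have e3: "l1 (gl n g') (gl m h') = \<bar>(real (snd n) + snd g') / 3 - (real (snd m) + snd h') / 3\<bar> + \<bar>(real (fst n) + fst g') / 3 - (real (fst m) + fst h') / 3\<bar>" by (simp add: l1_def gl_def add.commute)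
        show "l1 g' (fst g', 1) / 3 + l1 (gl ?n (fst g', 0)) (gl m h') \<le> l1 (gl n g') (gl m h')"
          unfolding e1 e2 e3 by (rule ar1[OF b4(3) b4(4) b4(7) A])
      qed
    next
      case 4
      let ?n = "(fst n, snd n - 1)"
      have nn: "?n \<in> NN" "adjacent n ?n" using 4 nm unfolding NN_def adjacent_def by auto
      have lt: "cdist ?n m < cdist n m" using 4 unfolding cdist_def by auto
      have fn: "real (snd n - 1) = real (snd n) - 1" using 4 by (simp add: of_nat_diff)
      show ?thesis
      proof (rule CROSS[OF IH x y n m nn M(4) M(3) gr1(4) gr1(3)])
        show "gl n (fst g', 0) = gl ?n (fst g', 1)" unfolding gl_def using fn by simp
        show "dl (Suc p) (B0, dB, SB) (ten_elt (Xl p (B0, dB, SB), dl p (B0, dB, SB), Sl p (B0, dB, SB)) ?n (Sl p (B0, dB, SB) (fst g', 1)))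
          (ten_elt (Xl p (B0, dB, SB), dl p (B0, dB, SB), Sl p (B0, dB, SB)) m y') \<le> l1 (gl ?n (fst g', 1)) (gl m h')"
          using less.hyps[OF lt nn(1) GS[OF M(3) gr1(3)]] .
        have "real (snd n) \<ge> real (snd m) + 1" using 4 by simp
        then have A: "real (snd m) + 1 \<le> real (snd n)" by simp
        have b4: "0 \<le> fst g'" "fst g' \<le> 1" "0 \<le> snd g'" "snd g' \<le> 1" "0 \<le> fst h'" "fst h' \<le> 1" "0 \<le> snd h'" "snd h' \<le> 1"
          using gb hb unfolding box_def by auto
        have e1: "l1 g' (fst g', 0) = \<bar>snd g'\<bar>" by (simp add: l1_def)
        have e2: "l1 (gl ?n (fst g', 1)) (gl m h') = \<bar>(real (snd n) - 1 + 1) / 3 - (real (snd m) + snd h') / 3\<bar> + \<bar>(real (fst n) + fst g') / 3 - (real (fst m) + fst h') / 3\<bar>" using fn by (simp add: l1_def gl_def add.commute)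
        have e3: "l1 (gl n g') (gl m h') = \<bar>(real (snd n) + snd g') / 3 - (real (snd m) + snd h') / 3\<bar> + \<bar>(real (fst n) + fst g') / 3 - (real (fst m) + fst h') / 3\<bar>" by (simp add: l1_def gl_def add.commute)
        show "l1 g' (fst g', 0) / 3 + l1 (gl ?n (fst g', 1)) (gl m h') \<le> l1 (gl n g') (gl m h')"
          unfolding e1 e2 e3 by (rule ar2[OF b4(3) b4(8) b4(7) A])
      qed
    qed
  qed
qed

end

fun glob :: "(nat \<times> nat) list \<Rightarrow> real \<times> real \<Rightarrow> real \<times> real" where
  "glob [] c = c"
| "glob (n # ns) c = gl n (glob ns c)"

context
  fixes B0 :: "'b set" and dB :: "'b \<Rightarrow> 'b \<Rightarrow> real" and SB :: "real \<times> real \<Rightarrow> 'b"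
  assumes sq: "square_ms B0 dB SB"
begin
lemma UB: "GHC p (B0, dB, SB) x g \<Longrightarrow> GHC p (B0, dB, SB) y h \<Longrightarrow> dl p (B0, dB, SB) x y \<le> l1 g h"
proof (induction p arbitrary: x y g h)
  case 0
  obtain g1 g2 h1 h2 where gh: "g = (g1, g2)" "h = (h1, h2)" by (cases g, cases h) blast
  have G: "fst g \<in> {0, 1} \<and> snd g \<in> {0, 1} \<and> x = {([], SB g)}" "fst h \<in> {0, 1} \<and> snd h \<in> {0, 1} \<and> y = {([], SB h)}"
    using 0 by (simp_all only: GHC.simps snd_conv)
  then have c: "g1 \<in> {0, 1}" "g2 \<in> {0, 1}" "h1 \<in> {0, 1}" "h2 \<in> {0, 1}" and xy: "x = {([], SB g)}" "y = {([], SB h)}"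
    using gh by auto
  have inB: "SB (g1, g2) \<in> B0" "SB (g1, h2) \<in> B0" "SB (h1, h2) \<in> B0"
    using SB_in[OF sq] corner_M0 c by auto
  have "dB (SB (g1, g2)) (SB (h1, h2)) \<le> dB (SB (g1, g2)) (SB (g1, h2)) + dB (SB (g1, h2)) (SB (h1, h2))"
    using Metric_space.triangle[OF ms[OF sq]] inB by blast
  moreover have "dB (SB (g1, g2)) (SB (g1, h2)) = \<bar>h2 - g2\<bar>" using sq1[OF sq, of g1 g2 h2] c by auto
  moreover have "dB (SB (g1, h2)) (SB (h1, h2)) = \<bar>h1 - g1\<bar>" using sq1[OF sq, of h2 g1 h1] c by auto
  ultimately show ?case using xy gh unfolding dl_0 l1_def by simp
next
  case (Suc p)
  have tp: "tensor_pow p (B0, dB, SB) = (Xl p (B0, dB, SB), dl p (B0, dB, SB), Sl p (B0, dB, SB))" by (rule tp_eq)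
  obtain n x' g' where x: "n \<in> NN" "GHC p (B0, dB, SB) x' g'"
    "x = ten_elt (Xl p (B0, dB, SB), dl p (B0, dB, SB), Sl p (B0, dB, SB)) n x'" "g = gl n g'"
    using Suc.prems(1) unfolding GHC.simps(2) tp by blast
  obtain m y' h' where y: "m \<in> NN" "GHC p (B0, dB, SB) y' h'"
    "y = ten_elt (Xl p (B0, dB, SB), dl p (B0, dB, SB), Sl p (B0, dB, SB)) m y'" "h = gl m h'"
    using Suc.prems(2) unfolding GHC.simps(2) tp by blast
  show ?case unfolding x(3) y(3) x(4) y(4) by (rule UB_step[OF sq Suc.IH y(2) y(1) x(1) x(2)])
qed



lemma tens_GHC: "set ns \<subseteq> NN \<Longrightarrow> fst c \<in> {0, 1} \<Longrightarrow> snd c \<in> {0, 1} \<Longrightarrow>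
   GHC (length ns) (B0, dB, SB) (tens_elem (B0, dB, SB) ns (SB c)) (glob ns c)"
proof (induction ns)
  case Nil then show ?case by simp
next
  case (Cons n ns)
  then have "n \<in> NN" "GHC (length ns) (B0, dB, SB) (tens_elem (B0, dB, SB) ns (SB c)) (glob ns c)" by auto
  then show ?case by (simp only: tens_elem.simps glob.simps length_Cons GHC.simps) blast
qed

lemma tens_dist:
  assumes "set ns \<subseteq> NN" "set ns' \<subseteq> NN" "length ns = p" "length ns' = p"
    "fst c \<in> {0, 1}" "snd c \<in> {0, 1}" "fst c' \<in> {0, 1}" "snd c' \<in> {0, 1}"
  shows "tdist p (B0, dB, SB) (tens_elem (B0, dB, SB) ns (SB c)) (tens_elem (B0, dB, SB) ns' (SB c'))
     = l1 (glob ns c) (glob ns' c')"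
proof -
  have g1: "GHC p (B0, dB, SB) (tens_elem (B0, dB, SB) ns (SB c)) (glob ns c)"
    using tens_GHC[OF assms(1) assms(5,6)] assms(3) by simp
  have g2: "GHC p (B0, dB, SB) (tens_elem (B0, dB, SB) ns' (SB c')) (glob ns' c')"
    using tens_GHC[OF assms(2) assms(7,8)] assms(4) by simp
  have "tdist p (B0, dB, SB) = dl p (B0, dB, SB)" unfolding tdist_def dl_def by simp
  moreover have "dl p (B0, dB, SB) (tens_elem (B0, dB, SB) ns (SB c)) (tens_elem (B0, dB, SB) ns' (SB c')) \<le> l1 (glob ns c) (glob ns' c')"
    by (rule UB[OF g1 g2])
  moreover have "l1 (glob ns c) (glob ns' c') \<le> dl p (B0, dB, SB) (tens_elem (B0, dB, SB) ns (SB c)) (tens_elem (B0, dB, SB) ns' (SB c'))"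
    using LB[OF sq] g1 g2 unfolding LHC_def by blast
  ultimately show ?thesis by simp
qed

end

lemma glob_sum: "glob ns c = ((\<Sum>k<length ns. real (fst (ns ! k)) / 3 ^ (k + 1)) + fst c / 3 ^ length ns,
                             (\<Sum>k<length ns. real (snd (ns ! k)) / 3 ^ (k + 1)) + snd c / 3 ^ length ns)"
proof (induction ns)
  case Nil then show ?case by simp
next
  case (Cons n ns)
  have s1: "(\<Sum>k<length (n # ns). real (fst ((n # ns) ! k)) / 3 ^ (k + 1)) =
      real (fst n) / 3 + (\<Sum>k<length ns. real (fst (ns ! k)) / 3 ^ (k + 1)) / 3"
    by (simp add: sum.lessThan_Suc_shift sum_divide_distrib del: sum.lessThan_Suc)
  have s2: "(\<Sum>k<length (n # ns). real (snd ((n # ns) ! k)) / 3 ^ (k + 1)) =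
      real (snd n) / 3 + (\<Sum>k<length ns. real (snd (ns ! k)) / 3 ^ (k + 1)) / 3"
    by (simp add: sum.lessThan_Suc_shift sum_divide_distrib del: sum.lessThan_Suc)
  show ?case unfolding glob.simps Cons s1 s2 gl_def by (simp add: field_simps)
qed

theorem mainTheorem13:
  fixes B :: "'b set" and dB :: "'b \<Rightarrow> 'b \<Rightarrow> real" and SB :: "real \<times> real \<Rightarrow> 'b"
    and p :: nat and ns ns' :: "(nat \<times> nat) list" and r s t u :: real
  assumes "square_ms B dB SB"
    and "length ns = p" and "length ns' = p"
    and "set ns \<subseteq> NN" and "set ns' \<subseteq> NN"
    and "r \<in> {0, 1}" and "s \<in> {0, 1}" and "t \<in> {0, 1}" and "u \<in> {0, 1}"
  shows "(let pt = (\<lambda>ms a c.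
                 ((\<Sum>k<p. real (fst (ms ! k)) / 3 ^ (k + 1)) + a / 3 ^ p,
                  (\<Sum>k<p. real (snd (ms ! k)) / 3 ^ (k + 1)) + c / 3 ^ p));
              h = 3 ^ p * \<bar>fst (pt ns r s) - fst (pt ns' t u)\<bar>;
              v = 3 ^ p * \<bar>snd (pt ns r s) - snd (pt ns' t u)\<bar>
          in tdist p (B, dB, SB) (tens_elem (B, dB, SB) ns (SB (r, s)))
                                 (tens_elem (B, dB, SB) ns' (SB (t, u))) = (h + v) / 3 ^ p)
      \<and> tdist p (B, dB, SB) (tens_elem (B, dB, SB) ns (SB (0, 0)))
                            (tens_elem (B, dB, SB) ns' (SB (0, 0)))
          = \<bar>\<Sum>m<p. (real (fst (ns ! m)) - real (fst (ns' ! m))) / 3 ^ (m + 1)\<bar>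
            + \<bar>\<Sum>m<p. (real (snd (ns ! m)) - real (snd (ns' ! m))) / 3 ^ (m + 1)\<bar>"
  proof -
  let ?B = "(B, dB, SB)"
  have td: "\<And>c c'. fst c \<in> {0, 1} \<Longrightarrow> snd c \<in> {0, 1} \<Longrightarrow> fst c' \<in> {0, 1} \<Longrightarrow> snd c' \<in> {0, 1} \<Longrightarrow>
      tdist p ?B (tens_elem ?B ns (SB c)) (tens_elem ?B ns' (SB c')) = l1 (glob ns c) (glob ns' c')"
    using tens_dist[OF assms(1) assms(4) assms(5) assms(2) assms(3)] by blast
  have p3: "(3::real) ^ p > 0" by simp
  have A: "tdist p ?B (tens_elem ?B ns (SB (r, s))) (tens_elem ?B ns' (SB (t, u)))
     = \<bar>fst (glob ns (r, s)) - fst (glob ns' (t, u))\<bar> + \<bar>snd (glob ns (r, s)) - snd (glob ns' (t, u))\<bar>"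
    using td[of "(r, s)" "(t, u)"] assms(6-9) unfolding l1_def by simp
  have B: "tdist p ?B (tens_elem ?B ns (SB (0, 0))) (tens_elem ?B ns' (SB (0, 0)))
     = \<bar>fst (glob ns (0, 0)) - fst (glob ns' (0, 0))\<bar> + \<bar>snd (glob ns (0, 0)) - snd (glob ns' (0, 0))\<bar>"
    using td[of "(0, 0)" "(0, 0)"] unfolding l1_def by simp
  have gs: "\<And>c. glob ns c = ((\<Sum>k<p. real (fst (ns ! k)) / 3 ^ (k + 1)) + fst c / 3 ^ p,
                             (\<Sum>k<p. real (snd (ns ! k)) / 3 ^ (k + 1)) + snd c / 3 ^ p)"
    using glob_sum[of ns] assms(2) by simp
  have gs': "\<And>c. glob ns' c = ((\<Sum>k<p. real (fst (ns' ! k)) / 3 ^ (k + 1)) + fst c / 3 ^ p,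
                             (\<Sum>k<p. real (snd (ns' ! k)) / 3 ^ (k + 1)) + snd c / 3 ^ p)"
    using glob_sum[of ns'] assms(3) by simp
  have C1: "(\<Sum>m<p. (real (fst (ns ! m)) - real (fst (ns' ! m))) / 3 ^ (m + 1)) =
     (\<Sum>k<p. real (fst (ns ! k)) / 3 ^ (k + 1)) - (\<Sum>k<p. real (fst (ns' ! k)) / 3 ^ (k + 1))"
    by (simp add: diff_divide_distrib sum_subtractf)
  have C2: "(\<Sum>m<p. (real (snd (ns ! m)) - real (snd (ns' ! m))) / 3 ^ (m + 1)) =
     (\<Sum>k<p. real (snd (ns ! k)) / 3 ^ (k + 1)) - (\<Sum>k<p. real (snd (ns' ! k)) / 3 ^ (k + 1))"
    by (simp add: diff_divide_distrib sum_subtractf)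
  show ?thesis
  proof
    show "let pt = (\<lambda>ms a c.
                 ((\<Sum>k<p. real (fst (ms ! k)) / 3 ^ (k + 1)) + a / 3 ^ p,
                  (\<Sum>k<p. real (snd (ms ! k)) / 3 ^ (k + 1)) + c / 3 ^ p));
              h = 3 ^ p * \<bar>fst (pt ns r s) - fst (pt ns' t u)\<bar>;
              v = 3 ^ p * \<bar>snd (pt ns r s) - snd (pt ns' t u)\<bar>
          in tdist p (B, dB, SB) (tens_elem (B, dB, SB) ns (SB (r, s)))
                                 (tens_elem (B, dB, SB) ns' (SB (t, u))) = (h + v) / 3 ^ p"
      unfolding Let_def A gs gs' using p3 by (simp add: field_simps)
    show "tdist p (B, dB, SB) (tens_elem (B, dB, SB) ns (SB (0, 0)))
                            (tens_elem (B, dB, SB) ns' (SB (0, 0)))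
          = \<bar>\<Sum>m<p. (real (fst (ns ! m)) - real (fst (ns' ! m))) / 3 ^ (m + 1)\<bar>
            + \<bar>\<Sum>m<p. (real (snd (ns ! m)) - real (snd (ns' ! m))) / 3 ^ (m + 1)\<bar>"
      unfolding B gs gs' C1 C2 by simp
  qed
qed

end
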